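(* Let $G$ be a connected graph on $N\ge 2$ vertices and let its vertex set be partitioned into two non-empty parts, one held by Alice and one held by Bob. Let $\rho_2$ be a two-qubit state shared between Alice and Bob. Suppose that from sufficiently many copies of $\rho_2$, Alice and Bob can produce, by stochastic local operations and classical communication (SLOCC) with respect to the Alice/Bob split (using additional local ancilla qubits if needed), the noisy $N$-qubit graph state $\rho_G$, where Alice holds the qubits of her part and Bob the qubits of his. If $\rho_2$ cannot be purified (distilled) to a maximally entangled two-qubit state, then $\rho_G$ cannot be purified to the pure graph state $|\psi_G\rangle$ by any protocol.
   Context: For a graph $G$ with vertices $V_G$ and edges $E_G$, attach a qubit to each vertex. The graph state $|\psi_G\rangle$ is the unique common $+1$ eigenstate of the stabilizers $K_i=X_i\prod_{\{i,j\}\in E_G}Z_j$, $i\in V_G$; equivalently, it is obtained by preparing every qubit in $|+\rangle=(|0\rangle+|1\rangle)/\sqrt2$ and applying a controlled-phase gate along every edge. The states $Z_j|\psi_G\rangle$, $j\in\{0,1\}^N$ (where $Z_j$ applies $Z$ to the qubits indicated by $j$) form an orthonormal basis, the graph-state basis. A noisy graph state is a mixed state $\rho_G=\sum_j\lambda_j Z_j|\psi_G\rangle\langle\psi_G|Z_j$. Purification of an $N$-qubit state $\rho$ to a pure target $|\psi\rangle$ means: each qubit is held by a different party, each party holds the corresponding qubit of every one of arbitrarily many copies of $\rho$, and the parties, restricted to (perfect) SLOCC, produce at least one copy of $|\psi\rangle$ with fidelity arbitrarily close to 1. Purification of a two-qubit state means purification to a maximally entangled (Bell) state. *)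

theory Defs
  imports Complex_Main
begin

(* Multi-qubit systems: qubits carry labels of type 'q; a computational basis
   state of the qubits in Q is a function a :: 'q => bool vanishing outside Q. *)
definition basis :: "'q set \<Rightarrow> ('q \<Rightarrow> bool) set" where
  "basis Q = {a. \<forall>x. a x \<longrightarrow> x \<in> Q}"

definition restr :: "('q \<Rightarrow> bool) \<Rightarrow> 'q set \<Rightarrow> ('q \<Rightarrow> bool)" where
  "restr a S = (\<lambda>x. x \<in> S \<and> a x)"

type_synonym 'q qop = "('q \<Rightarrow> bool) \<Rightarrow> ('q \<Rightarrow> bool) \<Rightarrow> complex"

definition trace :: "'q set \<Rightarrow> 'q qop \<Rightarrow> complex" where
  "trace Q \<rho> = (\<Sum>a\<in>basis Q. \<rho> a a)"

definition density :: "'q set \<Rightarrow> 'q qop \<Rightarrow> bool" where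
  "density Q \<rho> \<longleftrightarrow>
     (\<forall>a b. a \<notin> basis Q \<or> b \<notin> basis Q \<longrightarrow> \<rho> a b = 0) \<and>
     (\<forall>a b. \<rho> b a = cnj (\<rho> a b)) \<and>
     (\<forall>v. 0 \<le> Re (\<Sum>a\<in>basis Q. \<Sum>b\<in>basis Q. cnj (v a) * \<rho> a b * v b)) \<and>
     trace Q \<rho> = 1"

(* n copies of a state on Q; qubit q of copy c carries label (c,q) *)
definition copies :: "nat \<Rightarrow> 'q set \<Rightarrow> 'q qop \<Rightarrow> (nat \<times> 'q) qop" where
  "copies n Q \<rho> a b =
     (if a \<in> basis ({..<n} \<times> Q) \<and> b \<in> basis ({..<n} \<times> Q)
      then (\<Prod>c<n. \<rho> (\<lambda>q. a (c, q)) (\<lambda>q. b (c, q))) else 0)"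

(* product Kraus operator: party p applies an arbitrary linear map from its
   input qubits In p to its output qubits Out p (covers local ancillas,
   local measurements/postselection and discarding qubits) *)
definition kraus_prod ::
  "'p set \<Rightarrow> ('p \<Rightarrow> 'q set) \<Rightarrow> ('p \<Rightarrow> 'r set) \<Rightarrow>
   ('p \<Rightarrow> ('r \<Rightarrow> bool) \<Rightarrow> ('q \<Rightarrow> bool) \<Rightarrow> complex) \<Rightarrow>
   ('r \<Rightarrow> bool) \<Rightarrow> ('q \<Rightarrow> bool) \<Rightarrow> complex" where
  "kraus_prod P In Out A b a = (\<Prod>p\<in>P. A p (restr b (Out p)) (restr a (In p)))"

definition slocc_apply ::
  "'p set \<Rightarrow> ('p \<Rightarrow> 'q set) \<Rightarrow> ('p \<Rightarrow> 'r set) \<Rightarrow>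
   (nat \<Rightarrow> 'p \<Rightarrow> ('r \<Rightarrow> bool) \<Rightarrow> ('q \<Rightarrow> bool) \<Rightarrow> complex) \<Rightarrow> nat \<Rightarrow>
   'q qop \<Rightarrow> 'r qop" where
  "slocc_apply P In Out K m \<rho> b b' =
     (\<Sum>k<m. \<Sum>a\<in>basis (\<Union>(In ` P)). \<Sum>a'\<in>basis (\<Union>(In ` P)).
        kraus_prod P In Out (K k) b a * \<rho> a a' * cnj (kraus_prod P In Out (K k) b' a'))"

(* SLOCC conversion (perfect, i.e. exact, with nonzero success probability):
   parties P, party p holds input qubits In p and output qubits Out p *)
definition slocc_converts ::
  "'p set \<Rightarrow> ('p \<Rightarrow> 'q set) \<Rightarrow> ('p \<Rightarrow> 'r set) \<Rightarrow> 'q qop \<Rightarrow> 'r qop \<Rightarrow> bool" where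
  "slocc_converts P In Out \<rho> \<sigma> \<longleftrightarrow>
     finite P \<and> (\<forall>p\<in>P. finite (In p) \<and> finite (Out p)) \<and>
     (\<forall>p\<in>P. \<forall>p'\<in>P. p \<noteq> p' \<longrightarrow> In p \<inter> In p' = {} \<and> Out p \<inter> Out p' = {}) \<and>
     (\<exists>m K. trace (\<Union>(Out ` P)) (slocc_apply P In Out K m \<rho>) \<noteq> 0 \<and>
        (\<forall>b b'. \<sigma> b b' =
           (if b \<in> basis (\<Union>(Out ` P)) \<and> b' \<in> basis (\<Union>(Out ` P))
            then slocc_apply P In Out K m \<rho> b b' / trace (\<Union>(Out ` P)) (slocc_apply P In Out K m \<rho>)
            else 0)))"

definition fidelity :: "'q set \<Rightarrow> (('q \<Rightarrow> bool) \<Rightarrow> complex) \<Rightarrow> 'q qop \<Rightarrow> real" where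
  "fidelity Q \<psi> \<sigma> = Re (\<Sum>a\<in>basis Q. \<Sum>b\<in>basis Q. cnj (\<psi> a) * \<sigma> a b * \<psi> b)"

(* purification of a state on the qubits Q (each qubit its own party, which
   holds that qubit of every copy) to the pure state psi *)
definition purifiable :: "'q set \<Rightarrow> 'q qop \<Rightarrow> (('q \<Rightarrow> bool) \<Rightarrow> complex) \<Rightarrow> bool" where
  "purifiable Q \<rho> \<psi> \<longleftrightarrow>
     (\<forall>\<epsilon>>0. \<exists>n \<sigma>. slocc_converts Q (\<lambda>q. {..<n} \<times> {q}) (\<lambda>q. {q}) (copies n Q \<rho>) \<sigma>
                   \<and> fidelity Q \<psi> \<sigma> \<ge> 1 - \<epsilon>)"

definition simple_graph :: "nat set \<Rightarrow> (nat \<Rightarrow> nat \<Rightarrow> bool) \<Rightarrow> bool" where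
  "simple_graph V E \<longleftrightarrow> (\<forall>i j. E i j \<longrightarrow> i \<in> V \<and> j \<in> V \<and> i \<noteq> j \<and> E j i)"

definition graph_connected :: "nat set \<Rightarrow> (nat \<Rightarrow> nat \<Rightarrow> bool) \<Rightarrow> bool" where
  "graph_connected V E \<longleftrightarrow> (\<forall>i\<in>V. \<forall>j\<in>V. E\<^sup>*\<^sup>* i j)"

(* graph state |psi_G> = prod_{edges} CZ |+>^V *)
definition graph_state :: "nat set \<Rightarrow> (nat \<Rightarrow> nat \<Rightarrow> bool) \<Rightarrow> (nat \<Rightarrow> bool) \<Rightarrow> complex" where
  "graph_state V E a =
     (if a \<in> basis V
      then complex_of_real ((-1) ^ card {(i, j). i \<in> V \<and> j \<in> V \<and> i < j \<and> E i j \<and> a i \<and> a j}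
                             / sqrt (2 ^ card V))
      else 0)"

definition zgraph_state :: "nat set \<Rightarrow> (nat \<Rightarrow> nat \<Rightarrow> bool) \<Rightarrow> (nat \<Rightarrow> bool) \<Rightarrow> (nat \<Rightarrow> bool) \<Rightarrow> complex" where
  "zgraph_state V E j a = (-1) ^ card {i\<in>V. j i \<and> a i} * graph_state V E a"

definition noisy_graph_state ::
  "nat set \<Rightarrow> (nat \<Rightarrow> nat \<Rightarrow> bool) \<Rightarrow> ((nat \<Rightarrow> bool) \<Rightarrow> real) \<Rightarrow> nat qop" where
  "noisy_graph_state V E lam a b =
     (\<Sum>j\<in>basis V. complex_of_real (lam j) * zgraph_state V E j a * cnj (zgraph_state V E j b))"

datatype party = Alice | Bob

lemma UNIV_party: "(UNIV :: party set) = {Alice, Bob}"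
  using party.exhaust by blast

definition bell :: "(party \<Rightarrow> bool) \<Rightarrow> complex" where
  "bell a = (if a Alice = a Bob then complex_of_real (1 / sqrt 2) else 0)"

end

theory Submission
  imports Defs "HOL-Library.FuncSet"
begin

lemma finite_basis: "finite Q \<Longrightarrow> finite (basis Q)"
proof -
  assume "finite Q"
  have "basis Q \<subseteq> (\<lambda>S x. x \<in> S) ` Pow Q"
  proof
    fix a assume "a \<in> basis Q"
    then have "a = (\<lambda>x. x \<in> {x. a x})" and "{x. a x} \<in> Pow Q" by (auto simp: basis_def)
    then show "a \<in> (\<lambda>S x. x \<in> S) ` Pow Q" by blast
  qed
  then show ?thesis using \<open>finite Q\<close> finite_subset by blast
qed

lemma card_basis: "finite Q \<Longrightarrow> card (basis Q) = 2 ^ card Q"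
proof -
  assume f: "finite Q"
  have "bij_betw (\<lambda>S x. x \<in> S) (Pow Q) (basis Q)"
    unfolding bij_betw_def inj_on_def
  proof (intro conjI ballI impI)
    show "(\<lambda>S x. x \<in> S) ` Pow Q = basis Q"
    proof
      show "(\<lambda>S x. x \<in> S) ` Pow Q \<subseteq> basis Q" by (auto simp: basis_def)
      show "basis Q \<subseteq> (\<lambda>S x. x \<in> S) ` Pow Q"
      proof
        fix a assume "a \<in> basis Q"
        then have "a = (\<lambda>x. x \<in> {x. a x})" and "{x. a x} \<in> Pow Q" by (auto simp: basis_def)
        then show "a \<in> (\<lambda>S x. x \<in> S) ` Pow Q" by blast
      qed
    qed
  qed (metis mem_Collect_eq Collect_mem_eq)
  then have "card (basis Q) = card (Pow Q)" by (simp add: bij_betw_same_card)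
  then show ?thesis using f by (simp add: card_Pow)
qed

definition join :: "('q \<Rightarrow> bool) \<Rightarrow> ('q \<Rightarrow> bool) \<Rightarrow> ('q \<Rightarrow> bool)" where
  "join a b = (\<lambda>x. a x \<or> b x)"

lemma restr_basis: "restr a S \<in> basis S" by (auto simp: restr_def basis_def)

lemma restr_id: "a \<in> basis S \<Longrightarrow> restr a S = a"
  by (auto simp: restr_def basis_def)

lemma restr_restr: "restr (restr a X) Y = restr a (X \<inter> Y)"
  by (auto simp: restr_def)

lemma restr_join1: "a \<in> basis A \<Longrightarrow> b \<in> basis B \<Longrightarrow> A \<inter> B = {} \<Longrightarrow> restr (join a b) A = a"
  by (auto simp: restr_def basis_def join_def fun_eq_iff)

lemma restr_join2: "a \<in> basis A \<Longrightarrow> b \<in> basis B \<Longrightarrow> A \<inter> B = {} \<Longrightarrow> restr (join a b) B = b"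
  by (auto simp: restr_def basis_def join_def fun_eq_iff)

lemma sum_basis_union:
  assumes "A \<inter> B = {}" "finite A" "finite B"
  shows "(\<Sum>c\<in>basis (A \<union> B). f c) = (\<Sum>a\<in>basis A. \<Sum>b\<in>basis B. f (join a b))"
proof -
  have bij: "bij_betw (\<lambda>(a,b). join a b) (basis A \<times> basis B) (basis (A \<union> B))"
  proof (rule bij_betw_byWitness[where f' = "\<lambda>c. (restr c A, restr c B)"])
    show "\<forall>x\<in>basis A \<times> basis B. (\<lambda>c. (restr c A, restr c B)) ((\<lambda>(a, b). join a b) x) = x"
      using assms by (auto simp: restr_join1 restr_join2)
    show "\<forall>y\<in>basis (A \<union> B). (\<lambda>(a, b). join a b) (restr y A, restr y B) = y"
      by (auto simp: basis_def restr_def join_def fun_eq_iff)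
    show "(\<lambda>(a, b). join a b) ` (basis A \<times> basis B) \<subseteq> basis (A \<union> B)"
      by (auto simp: basis_def join_def)
    show "(\<lambda>c. (restr c A, restr c B)) ` basis (A \<union> B) \<subseteq> basis A \<times> basis B"
      by (auto simp: restr_basis)
  qed
  have "(\<Sum>c\<in>basis (A \<union> B). f c) = (\<Sum>x\<in>basis A \<times> basis B. f ((\<lambda>(a,b). join a b) x))"
    using sum.reindex_bij_betw[OF bij, of f] by simp
  also have "\<dots> = (\<Sum>a\<in>basis A. \<Sum>b\<in>basis B. f (join a b))"
    by (simp add: sum.cartesian_product prod.case_distrib)
  finally show ?thesis .
qed



lemma sw4a: "(\<Sum>m\<in>M. \<Sum>m'\<in>M'. \<Sum>a\<in>A. \<Sum>a'\<in>A'. f m m' a a') = (\<Sum>a\<in>A. \<Sum>a'\<in>A'. \<Sum>m\<in>M. \<Sum>m'\<in>M'. (f m m' a a' :: 'b::comm_monoid_add))"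
proof -
  have "(\<Sum>m\<in>M. \<Sum>m'\<in>M'. \<Sum>a\<in>A. \<Sum>a'\<in>A'. f m m' a a') = (\<Sum>m\<in>M. \<Sum>a\<in>A. \<Sum>a'\<in>A'. \<Sum>m'\<in>M'. f m m' a a')"
  proof (rule sum.cong[OF refl])
    fix m
    have "(\<Sum>m'\<in>M'. \<Sum>a\<in>A. \<Sum>a'\<in>A'. f m m' a a') = (\<Sum>a\<in>A. \<Sum>m'\<in>M'. \<Sum>a'\<in>A'. f m m' a a')" by (rule sum.swap)
    also have "\<dots> = (\<Sum>a\<in>A. \<Sum>a'\<in>A'. \<Sum>m'\<in>M'. f m m' a a')" by (rule sum.cong[OF refl], rule sum.swap)
    finally show "(\<Sum>m'\<in>M'. \<Sum>a\<in>A. \<Sum>a'\<in>A'. f m m' a a') = (\<Sum>a\<in>A. \<Sum>a'\<in>A'. \<Sum>m'\<in>M'. f m m' a a')" .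
  qed
  also have "\<dots> = (\<Sum>a\<in>A. \<Sum>m\<in>M. \<Sum>a'\<in>A'. \<Sum>m'\<in>M'. f m m' a a')" by (rule sum.swap)
  also have "\<dots> = (\<Sum>a\<in>A. \<Sum>a'\<in>A'. \<Sum>m\<in>M. \<Sum>m'\<in>M'. f m m' a a')" by (rule sum.cong[OF refl], rule sum.swap)
  finally show ?thesis .
qed

lemma sw3: "(\<Sum>a\<in>A. \<Sum>a'\<in>A'. \<Sum>k\<in>K. f a a' k) = (\<Sum>k\<in>K. \<Sum>a\<in>A. \<Sum>a'\<in>A'. (f a a' k :: 'b::comm_monoid_add))"
proof -
  have "(\<Sum>a\<in>A. \<Sum>a'\<in>A'. \<Sum>k\<in>K. f a a' k) = (\<Sum>a\<in>A. \<Sum>k\<in>K. \<Sum>a'\<in>A'. f a a' k)"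
    by (rule sum.cong[OF refl], rule sum.swap)
  also have "\<dots> = (\<Sum>k\<in>K. \<Sum>a\<in>A. \<Sum>a'\<in>A'. f a a' k)" by (rule sum.swap)
  finally show ?thesis .
qed

definition app1 :: "'q set \<Rightarrow> (('r \<Rightarrow> bool) \<Rightarrow> ('q \<Rightarrow> bool) \<Rightarrow> complex) \<Rightarrow> 'q qop \<Rightarrow> 'r qop" where
  "app1 Q K \<rho> b b' = (\<Sum>a\<in>basis Q. \<Sum>a'\<in>basis Q. K b a * \<rho> a a' * cnj (K b' a'))"

definition smap :: "'i set \<Rightarrow> 'q set \<Rightarrow> ('i \<Rightarrow> ('r \<Rightarrow> bool) \<Rightarrow> ('q \<Rightarrow> bool) \<Rightarrow> complex) \<Rightarrow> 'q qop \<Rightarrow> 'r qop" where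
  "smap I Q K \<rho> b b' = (\<Sum>k\<in>I. app1 Q (K k) \<rho> b b')"

definition comp :: "'m set \<Rightarrow> (('r \<Rightarrow> bool) \<Rightarrow> ('m \<Rightarrow> bool) \<Rightarrow> complex) \<Rightarrow> (('m \<Rightarrow> bool) \<Rightarrow> ('q \<Rightarrow> bool) \<Rightarrow> complex)
   \<Rightarrow> ('r \<Rightarrow> bool) \<Rightarrow> ('q \<Rightarrow> bool) \<Rightarrow> complex" where
  "comp M K2 K1 b a = (\<Sum>m\<in>basis M. K2 b m * K1 m a)"

lemma sum2_mult: 
  fixes x y :: complex
  shows "x * (\<Sum>a\<in>A. \<Sum>a'\<in>B. f a a') * y = (\<Sum>a\<in>A. \<Sum>a'\<in>B. x * f a a' * y)"
  by (simp add: sum_distrib_left sum_distrib_right)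

lemma app1_comp:
  assumes "finite Q" "finite M"
  shows "app1 M K2 (app1 Q K1 \<rho>) = app1 Q (comp M K2 K1) \<rho>"
proof (intro ext)
  fix b b'
  have "app1 M K2 (app1 Q K1 \<rho>) b b' =
    (\<Sum>m\<in>basis M. \<Sum>m'\<in>basis M. \<Sum>a\<in>basis Q. \<Sum>a'\<in>basis Q.
        (K2 b m * K1 m a) * \<rho> a a' * cnj (K2 b' m' * K1 m' a'))"
    unfolding app1_def sum2_mult
  proof (intro sum.cong refl)
    fix m m' a a'
    show "K2 b m * (K1 m a * \<rho> a a' * cnj (K1 m' a')) * cnj (K2 b' m') =
       K2 b m * K1 m a * \<rho> a a' * cnj (K2 b' m' * K1 m' a')"
      by (simp add: mult_ac)
  qed
  also have "\<dots> = (\<Sum>a\<in>basis Q. \<Sum>a'\<in>basis Q. \<Sum>m\<in>basis M. \<Sum>m'\<in>basis M.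
        (K2 b m * K1 m a) * \<rho> a a' * cnj (K2 b' m' * K1 m' a'))"
    by (rule sw4a)
  also have "\<dots> = app1 Q (comp M K2 K1) \<rho> b b'"
    unfolding app1_def comp_def sum_distrib_left sum_distrib_right cnj_sum
    by (rule sum.cong[OF refl], rule sum.cong[OF refl], rule sum.swap)
  finally show "app1 M K2 (app1 Q K1 \<rho>) b b' = app1 Q (comp M K2 K1) \<rho> b b'" .
qed

lemma app1_linear_sum:
  "app1 Q K (\<lambda>a a'. \<Sum>k\<in>I. F k a a') b b' = (\<Sum>k\<in>I. app1 Q K (F k) b b')"
  unfolding app1_def sum_distrib_left sum_distrib_right by (rule sw3)

lemma smap_comp:
  assumes "finite Q" "finite M"
  shows "smap I2 M K2 (smap I1 Q K1 \<rho>) = smap (I2 \<times> I1) Q (\<lambda>(k2,k1). comp M (K2 k2) (K1 k1)) \<rho>"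
proof (intro ext)
  fix b b'
  have "smap I2 M K2 (smap I1 Q K1 \<rho>) b b' = (\<Sum>k2\<in>I2. \<Sum>k1\<in>I1. app1 M (K2 k2) (app1 Q (K1 k1) \<rho>) b b')"
    unfolding smap_def[of I2] smap_def[of I1] app1_linear_sum ..
  also have "\<dots> = (\<Sum>k2\<in>I2. \<Sum>k1\<in>I1. app1 Q (comp M (K2 k2) (K1 k1)) \<rho> b b')"
    using assms by (simp add: app1_comp)
  also have "\<dots> = smap (I2 \<times> I1) Q (\<lambda>(k2,k1). comp M (K2 k2) (K1 k1)) \<rho> b b'"
    unfolding smap_def sum.cartesian_product by (simp add: split_def)
  finally show "smap I2 M K2 (smap I1 Q K1 \<rho>) b b' = smap (I2 \<times> I1) Q (\<lambda>(k2,k1). comp M (K2 k2) (K1 k1)) \<rho> b b'" .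
qed

lemma app1_cong:
  assumes "\<And>a a'. a \<in> basis Q \<Longrightarrow> a' \<in> basis Q \<Longrightarrow> \<rho> a a' = \<sigma> a a'"
  shows "app1 Q K \<rho> = app1 Q K \<sigma>"
proof (intro ext)
  fix b b' show "app1 Q K \<rho> b b' = app1 Q K \<sigma> b b'"
    unfolding app1_def by (rule sum.cong[OF refl], rule sum.cong[OF refl]) (simp add: assms)
qed

lemma smap_cong:
  assumes "\<And>a a'. a \<in> basis Q \<Longrightarrow> a' \<in> basis Q \<Longrightarrow> \<rho> a a' = \<sigma> a a'"
  shows "smap I Q K \<rho> = smap I Q K \<sigma>"
proof -
  have h: "\<And>K. app1 Q K \<rho> = app1 Q K \<sigma>" by (rule app1_cong) (rule assms)
  show ?thesis unfolding smap_def h ..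
qed

lemma app1_scale: "app1 Q K (\<lambda>a a'. c * \<rho> a a') b b' = c * app1 Q K \<rho> b b'"
  unfolding app1_def sum_distrib_left
  by (rule sum.cong[OF refl], rule sum.cong[OF refl]) (simp add: mult_ac)

lemma smap_scale: "smap I Q K (\<lambda>a a'. c * \<rho> a a') b b' = c * smap I Q K \<rho> b b'"
  unfolding smap_def app1_scale sum_distrib_left ..




lemma finite_party[simp]: "finite (UNIV :: party set)"
  by (simp add: UNIV_party)

lemma kraus_prod_party:
  "kraus_prod UNIV In Out A b a =
     A Alice (restr b (Out Alice)) (restr a (In Alice)) * A Bob (restr b (Out Bob)) (restr a (In Bob))"
  unfolding kraus_prod_def UNIV_party by simp

lemma Union_party: "\<Union>(F ` (UNIV :: party set)) = F Alice \<union> F Bob"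
  unfolding UNIV_party by simp

lemma comp_kp:
  assumes "Out1 Alice \<inter> Out1 Bob = {}" "finite (Out1 Alice)" "finite (Out1 Bob)"
  shows "comp (\<Union>(Out1 ` UNIV)) (kraus_prod UNIV Out1 Out2 A2) (kraus_prod UNIV In1 Out1 A1) b a =
    kraus_prod UNIV In1 Out2 (\<lambda>p b a. \<Sum>m\<in>basis (Out1 p). A2 p b m * A1 p m a) b a"
proof -
  let ?bA = "restr b (Out2 Alice)" and ?bB = "restr b (Out2 Bob)"
  let ?aA = "restr a (In1 Alice)" and ?aB = "restr a (In1 Bob)"
  have "comp (\<Union>(Out1 ` UNIV)) (kraus_prod UNIV Out1 Out2 A2) (kraus_prod UNIV In1 Out1 A1) b a
     = (\<Sum>x\<in>basis (Out1 Alice). \<Sum>y\<in>basis (Out1 Bob).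
          (A2 Alice ?bA x * A1 Alice x ?aA) * (A2 Bob ?bB y * A1 Bob y ?aB))"
    unfolding comp_def Union_party kraus_prod_party sum_basis_union[OF assms]
    using assms by (intro sum.cong refl) (simp add: restr_join1 restr_join2 mult_ac)
  also have "\<dots> = (\<Sum>x\<in>basis (Out1 Alice). A2 Alice ?bA x * A1 Alice x ?aA) *
                   (\<Sum>y\<in>basis (Out1 Bob). A2 Bob ?bB y * A1 Bob y ?aB)"
    by (simp add: sum_product)
  also have "\<dots> = kraus_prod UNIV In1 Out2 (\<lambda>p b a. \<Sum>m\<in>basis (Out1 p). A2 p b m * A1 p m a) b a"
    unfolding kraus_prod_party ..
  finally show ?thesis .
qed

lemma smap_to_slocc:
  assumes "finite I"
  shows "\<exists>m K'. \<forall>\<rho>. slocc_apply P In Out K' m \<rho> = smap I (\<Union>(In ` P)) (\<lambda>i. kraus_prod P In Out (K i)) \<rho>"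
proof -
  obtain g where g: "bij_betw g {0..<card I} I" using ex_bij_betw_nat_finite[OF assms] by blast
  have "slocc_apply P In Out (\<lambda>k. K (g k)) (card I) \<rho> = smap I (\<Union>(In ` P)) (\<lambda>i. kraus_prod P In Out (K i)) \<rho>" for \<rho>
  proof (intro ext)
    fix b b'
    have "smap I (\<Union>(In ` P)) (\<lambda>i. kraus_prod P In Out (K i)) \<rho> b b' =
      (\<Sum>k\<in>{0..<card I}. app1 (\<Union>(In ` P)) (kraus_prod P In Out (K (g k))) \<rho> b b')"
      unfolding smap_def using sum.reindex_bij_betw[OF g, symmetric] by simp
    then show "slocc_apply P In Out (\<lambda>k. K (g k)) (card I) \<rho> b b' = smap I (\<Union>(In ` P)) (\<lambda>i. kraus_prod P In Out (K i)) \<rho> b b'"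
      unfolding slocc_apply_def app1_def by (simp add: atLeast0LessThan)
  qed
  then show ?thesis by blast
qed


definition qfb :: "'q set \<Rightarrow> 'q qop \<Rightarrow> (('q \<Rightarrow> bool) \<Rightarrow> complex) \<Rightarrow> (('q \<Rightarrow> bool) \<Rightarrow> complex) \<Rightarrow> complex" where
  "qfb Q M f g = (\<Sum>a\<in>basis Q. \<Sum>b\<in>basis Q. cnj (f a) * M a b * g b)"

abbreviation qf where "qf Q M v \<equiv> qfb Q M v v"

definition spsd :: "'q set \<Rightarrow> 'q qop \<Rightarrow> bool" where
  "spsd Q M \<longleftrightarrow> (\<forall>v. Im (qf Q M v) = 0 \<and> Re (qf Q M v) \<ge> 0)"

lemma qf_app1:
  "qf R (app1 Q K \<rho>) v = qf Q \<rho> (\<lambda>a. \<Sum>b\<in>basis R. cnj (K b a) * v b)"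
proof -
  have "qf R (app1 Q K \<rho>) v = (\<Sum>b\<in>basis R. \<Sum>b'\<in>basis R. \<Sum>a\<in>basis Q. \<Sum>a'\<in>basis Q.
           (K b a * cnj (v b)) * \<rho> a a' * (cnj (K b' a') * v b'))"
    unfolding qfb_def app1_def sum_distrib_left sum_distrib_right
    by (rule sum.cong[OF refl], rule sum.cong[OF refl], rule sum.cong[OF refl], rule sum.cong[OF refl])
       (simp add: mult_ac)
  also have "\<dots> = (\<Sum>b'\<in>basis R. \<Sum>b\<in>basis R. \<Sum>a\<in>basis Q. \<Sum>a'\<in>basis Q.
           (K b a * cnj (v b)) * \<rho> a a' * (cnj (K b' a') * v b'))"
    by (rule sum.swap)
  also have "\<dots> = (\<Sum>a\<in>basis Q. \<Sum>a'\<in>basis Q. \<Sum>b'\<in>basis R. \<Sum>b\<in>basis R.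
           (K b a * cnj (v b)) * \<rho> a a' * (cnj (K b' a') * v b'))"
    by (rule sw4a)
  also have "\<dots> = qf Q \<rho> (\<lambda>a. \<Sum>b\<in>basis R. cnj (K b a) * v b)"
    unfolding qfb_def cnj_sum sum_distrib_left sum_distrib_right
    by (rule sum.cong[OF refl], rule sum.cong[OF refl], rule sum.cong[OF refl], rule sum.cong[OF refl])
       (simp add: mult_ac)
  finally show ?thesis .
qed

lemma qf_sum: "qfb R (\<lambda>b b'. \<Sum>k\<in>I. F k b b') f g = (\<Sum>k\<in>I. qfb R (F k) f g)"
  unfolding qfb_def sum_distrib_left sum_distrib_right by (rule sw3)

lemma spsd_app1: "spsd Q \<rho> \<Longrightarrow> spsd R (app1 Q K \<rho>)"
  unfolding spsd_def qf_app1 by blast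

lemma spsd_smap: "spsd Q \<rho> \<Longrightarrow> spsd R (smap I Q K \<rho>)"
proof -
  assume h: "spsd Q \<rho>"
  have "spsd R (app1 Q (K k) \<rho>)" for k using spsd_app1[OF h] .
  then show ?thesis
    unfolding spsd_def smap_def qf_sum by (auto simp: sum_nonneg)
qed

lemma spsd_decomp:
  assumes "finite J" "\<And>j. j \<in> J \<Longrightarrow> w j \<ge> 0"
    and "\<And>a b. a \<in> basis Q \<Longrightarrow> b \<in> basis Q \<Longrightarrow> M a b = (\<Sum>j\<in>J. complex_of_real (w j) * f j a * cnj (f j b))"
  shows "spsd Q M"
  unfolding spsd_def
proof
  fix v
  let ?g = "\<lambda>j. \<Sum>b\<in>basis Q. cnj (f j b) * v b"
  have "qf Q M v = (\<Sum>a\<in>basis Q. \<Sum>b\<in>basis Q. \<Sum>j\<in>J. complex_of_real (w j) * (cnj (v a) * f j a) * (cnj (f j b) * v b))"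
    unfolding qfb_def
  proof (rule sum.cong[OF refl], rule sum.cong[OF refl])
    fix a b assume ab: "a \<in> basis Q" "b \<in> basis Q"
    show "cnj (v a) * M a b * v b = (\<Sum>j\<in>J. complex_of_real (w j) * (cnj (v a) * f j a) * (cnj (f j b) * v b))"
      unfolding assms(3)[OF ab] sum_distrib_left sum_distrib_right
      by (rule sum.cong[OF refl]) (simp add: mult_ac)
  qed
  also have "\<dots> = (\<Sum>j\<in>J. \<Sum>a\<in>basis Q. \<Sum>b\<in>basis Q. complex_of_real (w j) * (cnj (v a) * f j a) * (cnj (f j b) * v b))"
    by (rule sw3)
  also have "\<dots> = (\<Sum>j\<in>J. complex_of_real (w j) * (cnj (?g j) * ?g j))"
  proof (rule sum.cong[OF refl])
    fix j
    have "complex_of_real (w j) * (cnj (?g j) * ?g j) =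
       (\<Sum>a\<in>basis Q. \<Sum>b\<in>basis Q. complex_of_real (w j) * (cnj (cnj (f j a) * v a) * (cnj (f j b) * v b)))"
      by (simp only: cnj_sum sum_product) (simp only: sum_distrib_left)
    also have "\<dots> = (\<Sum>a\<in>basis Q. \<Sum>b\<in>basis Q. complex_of_real (w j) * (cnj (v a) * f j a) * (cnj (f j b) * v b))"
      by (rule sum.cong[OF refl], rule sum.cong[OF refl]) (simp add: mult_ac)
    finally show "(\<Sum>a\<in>basis Q. \<Sum>b\<in>basis Q. complex_of_real (w j) * (cnj (v a) * f j a) * (cnj (f j b) * v b)) =
       complex_of_real (w j) * (cnj (?g j) * ?g j)" by simp
  qed
  also have "\<dots> = (\<Sum>j\<in>J. complex_of_real (w j * (cmod (?g j))^2))"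
  proof (rule sum.cong[OF refl])
    fix j
    have h: "cnj (?g j) * ?g j = complex_of_real ((cmod (?g j))^2)"
      by (simp only: complex_norm_square mult.commute)
    show "complex_of_real (w j) * (cnj (?g j) * ?g j) = complex_of_real (w j * (cmod (?g j))^2)"
      by (simp only: h of_real_mult)
  qed
  finally have e: "qf Q M v = complex_of_real (\<Sum>j\<in>J. w j * (cmod (?g j))^2)" by simp
  show "Im (qf Q M v) = 0 \<and> 0 \<le> Re (qf Q M v)"
    unfolding e using assms(2) by (auto intro!: sum_nonneg)
qed

lemma qfb_sum_left: "qfb Q M (\<lambda>a. \<Sum>x\<in>X. f x a) g = (\<Sum>x\<in>X. qfb Q M (f x) g)"
  unfolding qfb_def cnj_sum sum_distrib_right
  by (subst sw3) simp

lemma qfb_sum_right: "qfb Q M f (\<lambda>a. \<Sum>x\<in>X. g x a) = (\<Sum>x\<in>X. qfb Q M f (g x))"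
  unfolding qfb_def sum_distrib_left
  by (subst sw3) simp

lemma qfb_diff: "qf Q M (\<lambda>a. f a - g a) = qf Q M f - qfb Q M f g - qfb Q M g f + qf Q M g"
proof -
  have "qf Q M (\<lambda>a. f a - g a) = (\<Sum>a\<in>basis Q. \<Sum>b\<in>basis Q.
     cnj (f a) * M a b * f b - cnj (f a) * M a b * g b - cnj (g a) * M a b * f b + cnj (g a) * M a b * g b)"
    unfolding qfb_def by (rule sum.cong[OF refl], rule sum.cong[OF refl]) (simp add: algebra_simps)
  then show ?thesis unfolding qfb_def by (simp only: sum.distrib sum_subtractf)
qed

lemma avg_ineq:
  assumes psd: "\<And>v. Re (qf Q \<sigma> v) \<ge> 0" and fin: "finite X"
  shows "Re (qf Q \<sigma> (\<lambda>a. \<Sum>x\<in>X. \<phi> x a)) \<le> real (card X) * (\<Sum>x\<in>X. Re (qf Q \<sigma> (\<phi> x)))"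
proof -
  let ?B = "\<lambda>x y. qfb Q \<sigma> (\<phi> x) (\<phi> y)"
  have "0 \<le> (\<Sum>x\<in>X. \<Sum>y\<in>X. Re (qf Q \<sigma> (\<lambda>a. \<phi> x a - \<phi> y a)))"
    using psd by (intro sum_nonneg) auto
  also have "\<dots> = (\<Sum>x\<in>X. \<Sum>y\<in>X. Re (?B x x) + Re (?B y y) - Re (?B x y) - Re (?B y x))"
    unfolding qfb_diff by (simp add: algebra_simps)
  also have "\<dots> = 2 * real (card X) * (\<Sum>x\<in>X. Re (?B x x)) - 2 * Re (\<Sum>x\<in>X. \<Sum>y\<in>X. ?B x y)"
  proof -
    have s1: "(\<Sum>x\<in>X. \<Sum>y\<in>X. Re (?B y x)) = (\<Sum>x\<in>X. \<Sum>y\<in>X. Re (?B x y))"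
      by (rule sum.swap)
    show ?thesis
      by (simp add: sum_subtractf sum.distrib s1 sum_distrib_left[symmetric] Re_sum)
  qed
  finally have "Re (\<Sum>x\<in>X. \<Sum>y\<in>X. ?B x y) \<le> real (card X) * (\<Sum>x\<in>X. Re (?B x x))" by simp
  moreover have "qf Q \<sigma> (\<lambda>a. \<Sum>x\<in>X. \<phi> x a) = (\<Sum>x\<in>X. \<Sum>y\<in>X. ?B x y)"
    unfolding qfb_sum_left qfb_sum_right ..
  ultimately show ?thesis by simp
qed


lemma prod_group: fixes n m :: nat shows "(\<Prod>i<n*m. g i) = (\<Prod>c<n. \<Prod>j<m. (g (c*m+j) :: 'a::comm_monoid_mult))"
proof -
  have "(\<Prod>c<n. \<Prod>j<m. g (c*m+j)) = (\<Prod>c<n. prod g {c*m..<c*m+m})"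
  proof (rule prod.cong[OF refl])
    fix c
    show "(\<Prod>j<m. g (c*m+j)) = prod g {c*m..<c*m+m}"
      using prod.atLeastLessThan_shift_0[of g "c*m" "c*m+m"] by (simp add: atLeast0LessThan comp_def)
  qed
  also have "\<dots> = (\<Prod>i<n*m. g i)" by (rule prod.nat_group)
  finally show ?thesis by simp
qed

definition sl :: "nat \<Rightarrow> (nat \<times> 'q \<Rightarrow> bool) \<Rightarrow> ('q \<Rightarrow> bool)" where
  "sl c b = (\<lambda>q. b (c, q))"

definition sp :: "nat \<Rightarrow> nat \<Rightarrow> (nat \<times> 'p \<Rightarrow> bool) \<Rightarrow> (nat \<times> 'p \<Rightarrow> bool)" where
  "sp m c a = (\<lambda>(i, p). i < m \<and> a (c*m+i, p))"

definition glue :: "nat \<Rightarrow> nat \<Rightarrow> (nat \<Rightarrow> (nat \<times> 'p \<Rightarrow> bool)) \<Rightarrow> (nat \<times> 'p \<Rightarrow> bool)" where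
  "glue n m \<alpha> = (\<lambda>(i, p). i < n*m \<and> \<alpha> (i div m) (i mod m, p))"

lemma sl_basis: "b \<in> basis ({..<n} \<times> Q) \<Longrightarrow> c < n \<Longrightarrow> sl c b \<in> basis Q"
  by (auto simp: basis_def sl_def)

lemma sp_basis: "sp m c a \<in> basis ({..<m} \<times> UNIV)"
  by (auto simp: basis_def sp_def)

lemma sp_glue:
  assumes a: "\<alpha> \<in> PiE {..<n} (\<lambda>_. basis ({..<m} \<times> (UNIV::'p set)))" and "c < n"
  shows "sp m c (glue n m \<alpha>) = \<alpha> c"
proof -
  have ac: "\<alpha> c \<in> basis ({..<m} \<times> UNIV)" using a \<open>c<n\<close> by auto
  show "sp m c (glue n m \<alpha>) = \<alpha> c"
  proof (rule ext, clarify)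
    fix i p
    show "sp m c (glue n m \<alpha>) (i, p) = \<alpha> c (i, p)"
    proof (cases "i < m")
      case True
      have "c*m+i < n*m"
      proof -
        have "c*m+i < c*m+m" using True by simp
        also have "\<dots> = (Suc c)*m" by simp
        also have "\<dots> \<le> n*m" using \<open>c<n\<close> by (intro mult_right_mono) auto
        finally show ?thesis .
      qed
      then show ?thesis using True by (simp add: sp_def glue_def)
    next
      case False
      then show ?thesis using ac by (auto simp: sp_def basis_def)
    qed
  qed
qed

lemma glue_bij: "bij_betw (glue n m) (PiE {..<n} (\<lambda>_. basis ({..<m} \<times> (UNIV::'p set)))) (basis ({..<n*m} \<times> (UNIV::'p set)))"
proof (rule bij_betw_byWitness[where f' = "\<lambda>x. restrict (\<lambda>c. sp m c x) {..<n}"])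
  show "\<forall>\<alpha>\<in>PiE {..<n} (\<lambda>_. basis ({..<m} \<times> (UNIV::'p set))). restrict (\<lambda>c. sp m c (glue n m \<alpha>)) {..<n} = \<alpha>"
  proof
    fix \<alpha> :: "nat \<Rightarrow> (nat \<times> 'p \<Rightarrow> bool)"
    assume a: "\<alpha> \<in> PiE {..<n} (\<lambda>_. basis ({..<m} \<times> (UNIV::'p set)))"
    show "restrict (\<lambda>c. sp m c (glue n m \<alpha>)) {..<n} = \<alpha>"
    proof (rule ext)
      fix c show "restrict (\<lambda>c. sp m c (glue n m \<alpha>)) {..<n} c = \<alpha> c"
        using sp_glue[OF a, of c] a by (cases "c < n") (auto simp: PiE_def extensional_def)
    qed
  qed
  show "\<forall>x\<in>basis ({..<n*m} \<times> (UNIV::'p set)). glue n m (restrict (\<lambda>c. sp m c x) {..<n}) = x"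
  proof
    fix x :: "nat \<times> 'p \<Rightarrow> bool"
    assume x: "x \<in> basis ({..<n*m} \<times> (UNIV::'p set))"
    show "glue n m (restrict (\<lambda>c. sp m c x) {..<n}) = x"
    proof (rule ext, clarify)
      fix i p
      show "glue n m (restrict (\<lambda>c. sp m c x) {..<n}) (i, p) = x (i, p)"
      proof (cases "i < n*m")
        case True
        then have "m > 0" by (cases m) auto
        have "i div m < n" using True by (simp add: less_mult_imp_div_less)
        moreover have "i mod m < m" using \<open>m>0\<close> by simp
        moreover have "i div m * m + i mod m = i" by simp
        ultimately show ?thesis using True by (simp add: glue_def sp_def)
      next
        case False
        then show ?thesis using x by (auto simp: glue_def basis_def)
      qed
    qed
  qed
  show "glue n m ` PiE {..<n} (\<lambda>_. basis ({..<m} \<times> (UNIV::'p set))) \<subseteq> basis ({..<n*m} \<times> (UNIV::'p set))"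
    by (auto simp: glue_def basis_def)
  show "(\<lambda>x. restrict (\<lambda>c. sp m c x) {..<n}) ` basis ({..<n*m} \<times> (UNIV::'p set)) \<subseteq> PiE {..<n} (\<lambda>_. basis ({..<m} \<times> (UNIV::'p set)))"
    by (auto simp: sp_basis)
qed


lemma glue_basis: "\<alpha> \<in> PiE {..<n} (\<lambda>_. basis ({..<m} \<times> (UNIV::'p set))) \<Longrightarrow> glue n m \<alpha> \<in> basis ({..<n*m} \<times> (UNIV::'p set))"
  using glue_bij[of n m] unfolding bij_betw_def by blast

lemma glue_apply: "\<alpha> \<in> PiE {..<n} (\<lambda>_. basis ({..<m} \<times> (UNIV::'p set))) \<Longrightarrow> c < n \<Longrightarrow> j < m \<Longrightarrow>
   glue n m \<alpha> (c*m+j, q) = \<alpha> c (j, q)"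
  using sp_glue[of \<alpha> n m c] unfolding sp_def by (metis (mono_tags, lifting) case_prod_conv)

lemma copies_glue:
  assumes a: "\<alpha> \<in> PiE {..<n} (\<lambda>_. basis ({..<m} \<times> (UNIV::'p set)))"
      and a': "\<alpha>' \<in> PiE {..<n} (\<lambda>_. basis ({..<m} \<times> (UNIV::'p set)))"
  shows "copies (n*m) UNIV \<rho> (glue n m \<alpha>) (glue n m \<alpha>') = (\<Prod>c<n. copies m UNIV \<rho> (\<alpha> c) (\<alpha>' c))"
proof -
  have "copies (n*m) UNIV \<rho> (glue n m \<alpha>) (glue n m \<alpha>') =
      (\<Prod>i<n*m. \<rho> (\<lambda>q. glue n m \<alpha> (i, q)) (\<lambda>q. glue n m \<alpha>' (i, q)))"
    using glue_basis[OF a] glue_basis[OF a'] by (simp add: copies_def)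
  also have "\<dots> = (\<Prod>c<n. \<Prod>j<m. \<rho> (\<lambda>q. glue n m \<alpha> (c*m+j, q)) (\<lambda>q. glue n m \<alpha>' (c*m+j, q)))"
    by (rule prod_group)
  also have "\<dots> = (\<Prod>c<n. \<Prod>j<m. \<rho> (\<lambda>q. \<alpha> c (j, q)) (\<lambda>q. \<alpha>' c (j, q)))"
    using glue_apply[OF a] glue_apply[OF a'] by (intro prod.cong refl) simp
  also have "\<dots> = (\<Prod>c<n. copies m UNIV \<rho> (\<alpha> c) (\<alpha>' c))"
  proof (rule prod.cong[OF refl])
    fix c assume "c \<in> {..<n}"
    then have "\<alpha> c \<in> basis ({..<m} \<times> UNIV)" "\<alpha>' c \<in> basis ({..<m} \<times> UNIV)" using a a' by auto
    then show "(\<Prod>j<m. \<rho> (\<lambda>q. \<alpha> c (j, q)) (\<lambda>q. \<alpha>' c (j, q))) = copies m UNIV \<rho> (\<alpha> c) (\<alpha>' c)"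
      by (simp add: copies_def)
  qed
  finally show ?thesis .
qed

lemma sl_restr: "c < n \<Longrightarrow> sl c (restr b ({..<n} \<times> Ob)) = restr (sl c b) Ob"
  by (auto simp: sl_def restr_def fun_eq_iff)

lemma sp_restr:
  fixes n m c :: nat
  assumes "c < n"
  shows "sp m c (restr x ({..<n*m} \<times> P)) = restr (sp m c x) ({..<m} \<times> P)"
proof (rule ext, clarify)
  fix i p
  have "i < m \<Longrightarrow> c*m+i < n*m"
  proof -
    assume "i < m"
    have "c*m+i < c*m+m" using \<open>i<m\<close> by simp
    also have "\<dots> = (Suc c)*m" by simp
    also have "\<dots> \<le> n*m" using \<open>c<n\<close> by (intro mult_right_mono) auto
    finally show ?thesis .
  qed
  then show "sp m c (restr x ({..<n*m} \<times> P)) (i, p) = restr (sp m c x) ({..<m} \<times> P) (i, p)"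
    by (auto simp: sp_def restr_def)
qed


definition KT :: "nat \<Rightarrow> nat \<Rightarrow> ('i \<Rightarrow> party \<Rightarrow> ('q \<Rightarrow> bool) \<Rightarrow> (nat \<times> party \<Rightarrow> bool) \<Rightarrow> complex) \<Rightarrow>
    (nat \<Rightarrow> 'i) \<Rightarrow> party \<Rightarrow> (nat \<times> 'q \<Rightarrow> bool) \<Rightarrow> (nat \<times> party \<Rightarrow> bool) \<Rightarrow> complex" where
  "KT n m K1 \<kappa> p b a = (\<Prod>c<n. K1 (\<kappa> c) p (sl c b) (sp m c a))"

lemma kpT_glue:
  assumes a: "\<alpha> \<in> PiE {..<n} (\<lambda>_. basis ({..<m} \<times> (UNIV::party set)))"
  shows "kraus_prod UNIV (\<lambda>p. {..<n*m} \<times> {p}) (\<lambda>p. {..<n} \<times> Out1 p) (KT n m K1 \<kappa>) b (glue n m \<alpha>) =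
    (\<Prod>c<n. kraus_prod UNIV (\<lambda>p. {..<m} \<times> {p}) Out1 (K1 (\<kappa> c)) (sl c b) (\<alpha> c))"
proof -
  have "kraus_prod UNIV (\<lambda>p. {..<n*m} \<times> {p}) (\<lambda>p. {..<n} \<times> Out1 p) (KT n m K1 \<kappa>) b (glue n m \<alpha>) =
     (\<Prod>c<n. K1 (\<kappa> c) Alice (restr (sl c b) (Out1 Alice)) (restr (\<alpha> c) ({..<m} \<times> {Alice}))) *
     (\<Prod>c<n. K1 (\<kappa> c) Bob (restr (sl c b) (Out1 Bob)) (restr (\<alpha> c) ({..<m} \<times> {Bob})))"
    unfolding kraus_prod_party KT_def
  proof (rule arg_cong2[where f="(*)"]; rule prod.cong[OF refl])
    fix c p assume "c \<in> {..<n}"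
    then have c: "c < n" by simp
    have "sp m c (restr (glue n m \<alpha>) ({..<n*m} \<times> {p})) = restr (\<alpha> c) ({..<m} \<times> {p})" for p
      by (simp only: sp_restr[OF c] sp_glue[OF a c])
    then show "K1 (\<kappa> c) Alice (sl c (restr b ({..<n} \<times> Out1 Alice))) (sp m c (restr (glue n m \<alpha>) ({..<n * m} \<times> {Alice}))) =
       K1 (\<kappa> c) Alice (restr (sl c b) (Out1 Alice)) (restr (\<alpha> c) ({..<m} \<times> {Alice}))"
     "K1 (\<kappa> c) Bob (sl c (restr b ({..<n} \<times> Out1 Bob))) (sp m c (restr (glue n m \<alpha>) ({..<n * m} \<times> {Bob}))) =
       K1 (\<kappa> c) Bob (restr (sl c b) (Out1 Bob)) (restr (\<alpha> c) ({..<m} \<times> {Bob}))"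
      by (simp_all only: sl_restr[OF c])
  qed
  also have "\<dots> = (\<Prod>c<n. kraus_prod UNIV (\<lambda>p. {..<m} \<times> {p}) Out1 (K1 (\<kappa> c)) (sl c b) (\<alpha> c))"
    unfolding kraus_prod_party prod.distrib ..
  finally show ?thesis .
qed

lemma tensor_stage:
  fixes K1 :: "'i \<Rightarrow> party \<Rightarrow> ('q \<Rightarrow> bool) \<Rightarrow> (nat \<times> party \<Rightarrow> bool) \<Rightarrow> complex"
    and \<rho>2 :: "party qop" and \<rho>G :: "'q qop"
  assumes fin: "finite I1"
    and t1: "t1 \<noteq> 0"
    and G: "\<And>\<beta> \<beta>'. \<beta> \<in> basis V1 \<Longrightarrow> \<beta>' \<in> basis V1 \<Longrightarrow>
       \<rho>G \<beta> \<beta>' = smap I1 ({..<m} \<times> UNIV) (\<lambda>k. kraus_prod UNIV (\<lambda>p. {..<m} \<times> {p}) Out1 (K1 k)) (copies m UNIV \<rho>2) \<beta> \<beta>' / t1"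
    and b: "b \<in> basis ({..<n} \<times> V1)" and b': "b' \<in> basis ({..<n} \<times> V1)"
  shows "smap (PiE {..<n} (\<lambda>_. I1)) ({..<n*m} \<times> UNIV)
      (\<lambda>\<kappa>. kraus_prod UNIV (\<lambda>p. {..<n*m} \<times> {p}) (\<lambda>p. {..<n} \<times> Out1 p) (KT n m K1 \<kappa>))
      (copies (n*m) UNIV \<rho>2) b b' = t1 ^ n * copies n V1 \<rho>G b b'"
proof -
  let ?B = "basis ({..<m} \<times> (UNIV::party set))"
  let ?PB = "PiE {..<n} (\<lambda>_. ?B)"
  let ?X = "copies m UNIV \<rho>2"
  let ?kp = "\<lambda>k. kraus_prod UNIV (\<lambda>p. {..<m} \<times> {p}) Out1 (K1 k)"
  let ?kT = "\<lambda>\<kappa>. kraus_prod UNIV (\<lambda>p. {..<n*m} \<times> {p}) (\<lambda>p. {..<n} \<times> Out1 p) (KT n m K1 \<kappa>)"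
  let ?H = "\<lambda>c k \<alpha> \<alpha>'. ?kp k (sl c b) \<alpha> * ?X \<alpha> \<alpha>' * cnj (?kp k (sl c b') \<alpha>')"
  let ?Phi = "smap I1 ({..<m} \<times> UNIV) ?kp ?X"
  have finB: "finite ?B" by (simp add: finite_basis)
  have "t1 ^ n * copies n V1 \<rho>G b b' = t1 ^ n * (\<Prod>c<n. \<rho>G (sl c b) (sl c b'))"
    using b b' by (simp add: copies_def sl_def)
  also have "\<dots> = t1 ^ n * (\<Prod>c<n. ?Phi (sl c b) (sl c b') / t1)"
    by (rule arg_cong[where f="\<lambda>x. t1 ^ n * x"], rule prod.cong[OF refl])
       (simp add: G sl_basis[OF b] sl_basis[OF b'])
  also have "\<dots> = (\<Prod>c<n. ?Phi (sl c b) (sl c b'))"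
    using t1 by (simp add: prod_dividef)
  also have "\<dots> = (\<Prod>c<n. \<Sum>k\<in>I1. \<Sum>\<alpha>\<in>?B. \<Sum>\<alpha>'\<in>?B. ?H c k \<alpha> \<alpha>')"
    unfolding smap_def app1_def ..
  also have "\<dots> = (\<Sum>\<kappa>\<in>PiE {..<n} (\<lambda>_. I1). \<Prod>c<n. \<Sum>\<alpha>\<in>?B. \<Sum>\<alpha>'\<in>?B. ?H c (\<kappa> c) \<alpha> \<alpha>')"
    using fin by (intro prod_sum_PiE) auto
  also have "\<dots> = (\<Sum>\<kappa>\<in>PiE {..<n} (\<lambda>_. I1). \<Sum>\<alpha>\<in>?PB. \<Prod>c<n. \<Sum>\<alpha>'\<in>?B. ?H c (\<kappa> c) (\<alpha> c) \<alpha>')"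
    using finB by (intro sum.cong refl prod_sum_PiE) auto
  also have "\<dots> = (\<Sum>\<kappa>\<in>PiE {..<n} (\<lambda>_. I1). \<Sum>\<alpha>\<in>?PB. \<Sum>\<alpha>'\<in>?PB. \<Prod>c<n. ?H c (\<kappa> c) (\<alpha> c) (\<alpha>' c))"
    using finB by (intro sum.cong refl prod_sum_PiE) auto
  also have "\<dots> = (\<Sum>\<kappa>\<in>PiE {..<n} (\<lambda>_. I1). \<Sum>\<alpha>\<in>?PB. \<Sum>\<alpha>'\<in>?PB.
      ?kT \<kappa> b (glue n m \<alpha>) * copies (n*m) UNIV \<rho>2 (glue n m \<alpha>) (glue n m \<alpha>') * cnj (?kT \<kappa> b' (glue n m \<alpha>')))"
  proof (rule sum.cong[OF refl], rule sum.cong[OF refl], rule sum.cong[OF refl])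
    fix \<kappa> \<alpha> \<alpha>' assume a: "\<alpha> \<in> ?PB" and a': "\<alpha>' \<in> ?PB"
    show "(\<Prod>c<n. ?H c (\<kappa> c) (\<alpha> c) (\<alpha>' c)) =
      ?kT \<kappa> b (glue n m \<alpha>) * copies (n*m) UNIV \<rho>2 (glue n m \<alpha>) (glue n m \<alpha>') * cnj (?kT \<kappa> b' (glue n m \<alpha>'))"
      unfolding kpT_glue[OF a] kpT_glue[OF a'] copies_glue[OF a a'] cnj_prod prod.distrib ..
  qed
  also have "\<dots> = (\<Sum>\<kappa>\<in>PiE {..<n} (\<lambda>_. I1). \<Sum>x\<in>basis ({..<n*m} \<times> UNIV). \<Sum>x'\<in>basis ({..<n*m} \<times> UNIV).
      ?kT \<kappa> b x * copies (n*m) UNIV \<rho>2 x x' * cnj (?kT \<kappa> b' x'))"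
  proof (rule sum.cong[OF refl])
    fix \<kappa>
    show "(\<Sum>\<alpha>\<in>?PB. \<Sum>\<alpha>'\<in>?PB.
      ?kT \<kappa> b (glue n m \<alpha>) * copies (n*m) UNIV \<rho>2 (glue n m \<alpha>) (glue n m \<alpha>') * cnj (?kT \<kappa> b' (glue n m \<alpha>'))) =
      (\<Sum>x\<in>basis ({..<n*m} \<times> UNIV). \<Sum>x'\<in>basis ({..<n*m} \<times> UNIV).
      ?kT \<kappa> b x * copies (n*m) UNIV \<rho>2 x x' * cnj (?kT \<kappa> b' x'))"
    proof -
      have r: "\<And>g. (\<Sum>x\<in>?PB. g (glue n m x)) = sum g (basis ({..<n*m} \<times> UNIV))"
        using sum.reindex_bij_betw[OF glue_bij[of n m]] .
      let ?F = "\<lambda>x x'. ?kT \<kappa> b x * copies (n*m) UNIV \<rho>2 x x' * cnj (?kT \<kappa> b' x')"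
      have "(\<Sum>\<alpha>\<in>?PB. \<Sum>\<alpha>'\<in>?PB. ?F (glue n m \<alpha>) (glue n m \<alpha>')) = (\<Sum>\<alpha>\<in>?PB. \<Sum>x'\<in>basis ({..<n*m} \<times> UNIV). ?F (glue n m \<alpha>) x')"
        by (rule sum.cong[OF refl], rule r)
      also have "\<dots> = (\<Sum>x\<in>basis ({..<n*m} \<times> UNIV). \<Sum>x'\<in>basis ({..<n*m} \<times> UNIV). ?F x x')"
        by (rule r)
      finally show ?thesis .
    qed
  qed
  also have "\<dots> = smap (PiE {..<n} (\<lambda>_. I1)) ({..<n*m} \<times> UNIV) ?kT (copies (n*m) UNIV \<rho>2) b b'"
    unfolding smap_def app1_def ..
  finally show ?thesis by simp
qed


lemma slocc_smap: "slocc_apply P In Out K m \<rho> = smap {..<m} (\<Union>(In ` P)) (\<lambda>k. kraus_prod P In Out (K k)) \<rho>"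
  by (intro ext) (simp add: slocc_apply_def smap_def app1_def)

definition part :: "nat set \<Rightarrow> nat set \<Rightarrow> party \<Rightarrow> nat set" where
  "part V S p = (if p = Alice then S else V - S)"

lemma regroup:
  assumes "S \<subseteq> V" "finite V"
  shows "kraus_prod V (\<lambda>q. {..<n} \<times> {q}) (\<lambda>q. {q}) K b a =
    kraus_prod UNIV (\<lambda>p. {..<n} \<times> part V S p) (part V S) (\<lambda>p. kraus_prod (part V S p) (\<lambda>q. {..<n} \<times> {q}) (\<lambda>q. {q}) K) b a"
proof -
  have e1: "restr (restr b X) {q} = restr b {q}" if "q \<in> X" for X q and b :: "nat \<Rightarrow> bool"
    using that by (auto simp: restr_def fun_eq_iff)
  have e2: "restr (restr a ({..<n} \<times> X)) ({..<n} \<times> {q}) = restr a ({..<n} \<times> {q})" if "q \<in> X" for X q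
    using that by (auto simp: restr_def fun_eq_iff)
  have "kraus_prod UNIV (\<lambda>p. {..<n} \<times> part V S p) (part V S) (\<lambda>p. kraus_prod (part V S p) (\<lambda>q. {..<n} \<times> {q}) (\<lambda>q. {q}) K) b a
     = (\<Prod>q\<in>S. K q (restr b {q}) (restr a ({..<n} \<times> {q}))) * (\<Prod>q\<in>V - S. K q (restr b {q}) (restr a ({..<n} \<times> {q})))"
    unfolding kraus_prod_party unfolding kraus_prod_def part_def
  proof (simp only: simp_thms party.distinct if_True if_False, rule arg_cong2[where f="(*)"]; rule prod.cong[OF refl])
    fix q assume q: "q \<in> S"
    show "K q (restr (restr b S) {q}) (restr (restr a ({..<n} \<times> S)) ({..<n} \<times> {q})) =
          K q (restr b {q}) (restr a ({..<n} \<times> {q}))" by (simp only: e1[OF q] e2[OF q])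
  next
    fix q assume q: "q \<in> V - S"
    show "K q (restr (restr b (V - S)) {q}) (restr (restr a ({..<n} \<times> (V - S))) ({..<n} \<times> {q})) =
          K q (restr b {q}) (restr a ({..<n} \<times> {q}))" by (simp only: e1[OF q] e2[OF q])
  qed
  also have "\<dots> = kraus_prod V (\<lambda>q. {..<n} \<times> {q}) (\<lambda>q. {q}) K b a"
    unfolding kraus_prod_def using assms by (simp add: prod.subset_diff[of S V] mult.commute)
  finally show ?thesis by simp
qed

definition Ed :: "nat set \<Rightarrow> (nat \<Rightarrow> nat \<Rightarrow> bool) \<Rightarrow> (nat \<Rightarrow> bool) \<Rightarrow> (nat \<times> nat) set" where
  "Ed V E a = {(i, j). i \<in> V \<and> j \<in> V \<and> i < j \<and> E i j \<and> a i \<and> a j}"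

definition deg :: "nat set \<Rightarrow> (nat \<Rightarrow> nat \<Rightarrow> bool) \<Rightarrow> nat \<Rightarrow> (nat \<Rightarrow> bool) \<Rightarrow> nat" where
  "deg V E w a = card {j \<in> V. E w j \<and> a j}"

lemma Ed_add:
  assumes sg: "simple_graph V E" and fin: "finite V" and w: "w \<in> V" and y: "\<not> y w"
  shows "card (Ed V E (y(w := True))) = card (Ed V E y) + deg V E w y"
proof -
  let ?J = "{j \<in> V. E w j \<and> y j}"
  let ?f = "\<lambda>j. (min w j, max w j)"
  have E: "E i j \<Longrightarrow> i \<in> V \<and> j \<in> V \<and> i \<noteq> j \<and> E j i" for i j
    using sg unfolding simple_graph_def by blast
  have eq: "Ed V E (y(w := True)) = Ed V E y \<union> ?f ` ?J"
  proof
    show "Ed V E (y(w := True)) \<subseteq> Ed V E y \<union> ?f ` ?J"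
    proof
      fix p assume p: "p \<in> Ed V E (y(w := True))"
      obtain i j where ij: "p = (i, j)" by (cases p)
      show "p \<in> Ed V E y \<union> ?f ` ?J"
      proof (cases "i = w \<or> j = w")
        case True
        then show ?thesis
        proof
          assume "i = w"
          then have "j \<in> ?J" "p = ?f j" using p ij E[of i j] by (auto simp: Ed_def)
          then show ?thesis by blast
        next
          assume "j = w"
          then have "i \<in> ?J" "p = ?f i" using p ij E[of i j] by (auto simp: Ed_def)
          then show ?thesis by blast
        qed
      next
        case False
        then show ?thesis using p ij by (auto simp: Ed_def)
      qed
    qed
    show "Ed V E y \<union> ?f ` ?J \<subseteq> Ed V E (y(w := True))"
    proof
      fix p assume "p \<in> Ed V E y \<union> ?f ` ?J"
      then show "p \<in> Ed V E (y(w := True))"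
      proof
        assume "p \<in> Ed V E y" then show ?thesis by (auto simp: Ed_def)
      next
        assume "p \<in> ?f ` ?J"
        then obtain j where j: "j \<in> ?J" "p = ?f j" by blast
        then have "j \<noteq> w" "E j w" using E[of w j] by auto
        then show ?thesis using j w by (cases "w < j") (auto simp: Ed_def min_def max_def)
      qed
    qed
  qed
  have disj: "Ed V E y \<inter> ?f ` ?J = {}"
    using y by (auto simp: Ed_def min_def max_def split: if_splits)
  have inj: "inj_on ?f ?J"
  proof (rule inj_onI)
    fix j j' assume "j \<in> ?J" "j' \<in> ?J" "?f j = ?f j'"
    then show "j = j'" by (auto simp: min_def max_def split: if_splits)
  qed
  have finE: "finite (Ed V E y)"
    by (rule finite_subset[of _ "V \<times> V"]) (auto simp: Ed_def fin)
  have finJ: "finite ?J" using fin by simp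
  show ?thesis
    unfolding eq deg_def
    using card_Un_disjoint[OF finE finite_imageI[OF finJ] disj] card_image[OF inj] by simp
qed


lemma Ed_decomp:
  assumes sg: "simple_graph V E" and fin: "finite V" and uv: "u \<in> V" "v \<in> V" "u \<noteq> v" "E u v"
    and a: "a \<in> basis V"
  shows "card (Ed V E a) = card (Ed V E (restr a (V - {u, v}))) + (if a u then deg V E u (restr a (V - {u, v})) else 0)
     + (if a v then deg V E v (restr a (V - {u, v})) else 0) + (if a u \<and> a v then 1 else 0)"
proof -
  let ?x = "restr a (V - {u, v})"
  define x1 where "x1 = (if a u then ?x(u := True) else ?x)"
  have xu: "\<not> ?x u" and xv: "\<not> ?x v" by (auto simp: restr_def)
  have x1v: "\<not> x1 v" using xv uv by (auto simp: x1_def)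
  have aeq: "a = (if a v then x1(v := True) else x1)"
    using a by (auto simp: x1_def restr_def basis_def fun_eq_iff)
  have c1: "card (Ed V E x1) = card (Ed V E ?x) + (if a u then deg V E u ?x else 0)"
    using Ed_add[of V E u ?x, OF sg fin uv(1) xu] by (simp add: x1_def)
  have c2: "card (Ed V E a) = card (Ed V E x1) + (if a v then deg V E v x1 else 0)"
    using Ed_add[of V E v x1, OF sg fin uv(2) x1v] aeq by (cases "a v") simp_all
  have d: "deg V E v x1 = deg V E v ?x + (if a u then 1 else 0)"
  proof (cases "a u")
    case True
    have Evu: "E v u" using sg uv unfolding simple_graph_def by blast
    have "{j \<in> V. E v j \<and> x1 j} = insert u {j \<in> V. E v j \<and> ?x j}"
      using True Evu uv by (auto simp: x1_def)
    moreover have "u \<notin> {j \<in> V. E v j \<and> ?x j}" using xu by simp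
    ultimately show ?thesis using True fin by (simp add: deg_def)
  next
    case False
    then show ?thesis by (simp add: x1_def)
  qed
  show ?thesis using c1 c2 d by simp
qed


definition mkb :: "bool \<Rightarrow> bool \<Rightarrow> party \<Rightarrow> bool" where
  "mkb \<beta> \<gamma> = (\<lambda>p. if p = Alice then \<beta> else \<gamma>)"

lemma basis_UNIV: "basis UNIV = UNIV" by (auto simp: basis_def)

lemma restr_single: "restr b {p} p = b p" by (simp add: restr_def)

lemma sum_party_basis:
  "(\<Sum>b\<in>basis (UNIV :: party set). f b) = f (mkb True True) + f (mkb True False) + f (mkb False True) + f (mkb False False)"
proof -
  have bij: "bij_betw (\<lambda>(\<beta>, \<gamma>). mkb \<beta> \<gamma>) (UNIV \<times> UNIV) (UNIV :: (party \<Rightarrow> bool) set)"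
  proof (rule bij_betw_byWitness[where f' = "\<lambda>b. (b Alice, b Bob)"])
    show "\<forall>x\<in>UNIV \<times> UNIV. (\<lambda>b. (b Alice, b Bob)) ((\<lambda>(\<beta>, \<gamma>). mkb \<beta> \<gamma>) x) = x" by (auto simp: mkb_def)
    show "\<forall>y\<in>UNIV. (\<lambda>(\<beta>, \<gamma>). mkb \<beta> \<gamma>) (y Alice, y Bob) = y"
    proof
      fix y :: "party \<Rightarrow> bool"
      show "(\<lambda>(\<beta>, \<gamma>). mkb \<beta> \<gamma>) (y Alice, y Bob) = y"
      proof (rule ext)
        fix p show "(\<lambda>(\<beta>, \<gamma>). mkb \<beta> \<gamma>) (y Alice, y Bob) p = y p" by (cases p) (auto simp: mkb_def)
      qed
    qed
  qed auto
  have "(\<Sum>b\<in>basis (UNIV :: party set). f b) = (\<Sum>x\<in>UNIV \<times> UNIV. f ((\<lambda>(\<beta>, \<gamma>). mkb \<beta> \<gamma>) x))"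
    unfolding basis_UNIV using sum.reindex_bij_betw[OF bij, of f] by simp
  also have "\<dots> = f (mkb True True) + f (mkb True False) + f (mkb False True) + f (mkb False False)"
    by (simp add: UNIV_bool sum.cartesian_product[symmetric] add_ac)
  finally show ?thesis .
qed

lemma mkb_simps[simp]: "mkb \<beta> \<gamma> Alice = \<beta>" "mkb \<beta> \<gamma> Bob = \<gamma>"
  by (simp_all add: mkb_def)

locale g3 =
  fixes V :: "nat set" and E :: "nat \<Rightarrow> nat \<Rightarrow> bool" and S :: "nat set" and u v :: nat
  assumes sg: "simple_graph V E" and fin: "finite V" and SV: "S \<subseteq> V" and uS: "u \<in> S"
    and vV: "v \<in> V" and vS: "v \<notin> S" and Euv: "E u v"
begin

definition "R = V - {u, v}"

lemma uV: "u \<in> V" using uS SV by auto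
lemma uv: "u \<noteq> v" using uS vS by auto

definition Ufn :: "(nat \<Rightarrow> bool) \<Rightarrow> bool \<Rightarrow> bool \<Rightarrow> complex" where
  "Ufn x \<beta> \<alpha> = (if \<beta> = \<alpha> then (-1) ^ (card (Ed V E x) + (if \<alpha> then deg V E u x else 0)) else 0)"

definition Wfn :: "(nat \<Rightarrow> bool) \<Rightarrow> bool \<Rightarrow> bool \<Rightarrow> complex" where
  "Wfn x \<gamma> \<alpha> = (-1) ^ ((if \<alpha> then deg V E v x else 0) + (if \<alpha> \<and> \<gamma> then 1 else 0)) * complex_of_real (1 / sqrt 2)"

definition K3 :: "(nat \<Rightarrow> bool) \<Rightarrow> party \<Rightarrow> (party \<Rightarrow> bool) \<Rightarrow> (nat \<Rightarrow> bool) \<Rightarrow> complex" where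
  "K3 x p \<beta> a = (if p = Alice
     then (if restr a (S - {u}) = restr x (S - {u}) then Ufn x (\<beta> Alice) (a u) else 0)
     else (if restr a (V - S - {v}) = restr x (V - S - {v}) then Wfn x (\<beta> Bob) (a v) else 0))"

definition K3f :: "(nat \<Rightarrow> bool) \<Rightarrow> (party \<Rightarrow> bool) \<Rightarrow> (nat \<Rightarrow> bool) \<Rightarrow> complex" where
  "K3f x b a = (if restr a R = x then Ufn x (b Alice) (a u) * Wfn x (b Bob) (a v) else 0)"

lemma kp3: 
  assumes x: "x \<in> basis R"
  shows "kraus_prod UNIV (part V S) (\<lambda>p. {p}) (K3 x) b a = K3f x b a"
proof -
  have r1: "restr (restr a S) (S - {u}) = restr a (S - {u})" by (auto simp: restr_def fun_eq_iff)
  have r2: "restr (restr a (V - S)) (V - S - {v}) = restr a (V - S - {v})" by (auto simp: restr_def fun_eq_iff)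
  have au: "restr a S u = a u" using uS by (simp add: restr_def)
  have av: "restr a (V - S) v = a v" using vS vV by (simp add: restr_def)
  have eq: "(restr a (S - {u}) = restr x (S - {u}) \<and> restr a (V - S - {v}) = restr x (V - S - {v})) \<longleftrightarrow> restr a R = x"
    using x SV uS vS unfolding R_def by (auto simp: restr_def basis_def fun_eq_iff)
  show ?thesis
    unfolding kraus_prod_party K3f_def K3_def part_def
    using eq by (auto simp: r1 r2 au av restr_single)
qed


lemma neg1_sq: "((-1::complex) ^ k) * (-1) ^ k = 1"
  by (simp add: power_mult_distrib[symmetric])

lemma sq2: "complex_of_real (sqrt 2) * complex_of_real (sqrt 2) = 2"
  by (simp flip: of_real_mult)

lemma UW_sum:
  "(\<Sum>b\<in>basis (UNIV :: party set). Ufn x (b Alice) \<alpha> * Wfn x (b Bob) \<alpha>2 * cnj (Ufn x (b Alice) \<alpha>' * Wfn x (b Bob) \<alpha>2')) =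
    (if \<alpha> = \<alpha>' \<and> \<alpha>2 = \<alpha>2' then 1 else 0)"
  unfolding sum_party_basis mkb_simps Ufn_def Wfn_def
  by (cases \<alpha>; cases \<alpha>'; cases \<alpha>2; cases \<alpha>2') (simp_all add: neg1_sq power_add algebra_simps sq2)


lemma finR: "finite R" using fin by (simp add: R_def)

lemma restr_R_basis: "restr a R \<in> basis R" by (rule restr_basis)

lemma a_eq:
  assumes "a \<in> basis V" "a' \<in> basis V"
  shows "a = a' \<longleftrightarrow> (restr a R = restr a' R \<and> a u = a' u \<and> a v = a' v)"
proof
  assume h: "restr a R = restr a' R \<and> a u = a' u \<and> a v = a' v"
  show "a = a'"
  proof (rule ext)
    fix z
    show "a z = a' z"
    proof (cases "z \<in> R")
      case True
      then show ?thesis using h by (metis restr_def)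
    next
      case False
      then have "z \<notin> V \<or> z = u \<or> z = v" by (auto simp: R_def)
      then show ?thesis using h assms by (auto simp: basis_def)
    qed
  qed
qed simp

lemma kernel:
  assumes a: "a \<in> basis V" and a': "a' \<in> basis V"
  shows "(\<Sum>x\<in>basis R. \<Sum>b\<in>basis (UNIV :: party set). K3f x b a * cnj (K3f x b a')) = (if a = a' then 1 else 0)"
proof -
  have "(\<Sum>x\<in>basis R. \<Sum>b\<in>basis (UNIV :: party set). K3f x b a * cnj (K3f x b a')) =
     (\<Sum>x\<in>basis R. if x = restr a R then (if restr a' R = x then
         (\<Sum>b\<in>basis (UNIV :: party set). Ufn x (b Alice) (a u) * Wfn x (b Bob) (a v) * cnj (Ufn x (b Alice) (a' u) * Wfn x (b Bob) (a' v)))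
       else 0) else 0)"
    unfolding K3f_def by (rule sum.cong[OF refl]) auto
  also have "\<dots> = (if restr a' R = restr a R then
         (\<Sum>b\<in>basis (UNIV :: party set). Ufn (restr a R) (b Alice) (a u) * Wfn (restr a R) (b Bob) (a v) *
            cnj (Ufn (restr a R) (b Alice) (a' u) * Wfn (restr a R) (b Bob) (a' v)))
       else 0)"
    using finite_basis[OF finR] restr_R_basis by (simp add: sum.delta')
  also have "\<dots> = (if a = a' then 1 else 0)"
    unfolding UW_sum a_eq[OF a a'] by auto
  finally show ?thesis .
qed

lemma trace3:
  "trace UNIV (smap (basis R) V (\<lambda>x. kraus_prod UNIV (part V S) (\<lambda>p. {p}) (K3 x)) \<sigma>) = trace V \<sigma>"
proof -
  have "trace UNIV (smap (basis R) V (\<lambda>x. kraus_prod UNIV (part V S) (\<lambda>p. {p}) (K3 x)) \<sigma>) =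
     (\<Sum>b\<in>basis UNIV. \<Sum>x\<in>basis R. \<Sum>a\<in>basis V. \<Sum>a'\<in>basis V. K3f x b a * \<sigma> a a' * cnj (K3f x b a'))"
    unfolding trace_def smap_def app1_def
    by (rule sum.cong[OF refl], rule sum.cong[OF refl]) (simp add: kp3)
  also have "\<dots> = (\<Sum>a\<in>basis V. \<Sum>a'\<in>basis V. \<Sum>b\<in>basis UNIV. \<Sum>x\<in>basis R. K3f x b a * \<sigma> a a' * cnj (K3f x b a'))"
    by (rule sw4a)
  also have "\<dots> = (\<Sum>a\<in>basis V. \<Sum>a'\<in>basis V. \<sigma> a a' * (\<Sum>x\<in>basis R. \<Sum>b\<in>basis UNIV. K3f x b a * cnj (K3f x b a')))"
    unfolding sum_distrib_left
    by (rule sum.cong[OF refl], rule sum.cong[OF refl], subst sum.swap, rule sum.cong[OF refl], rule sum.cong[OF refl])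
       (simp add: mult_ac)
  also have "\<dots> = (\<Sum>a\<in>basis V. \<Sum>a'\<in>basis V. \<sigma> a a' * (if a = a' then 1 else 0))"
    by (rule sum.cong[OF refl], rule sum.cong[OF refl]) (simp add: kernel)
  also have "\<dots> = trace V \<sigma>"
    unfolding trace_def using finite_basis[OF fin] by (simp add: if_distrib sum.delta cong: if_cong)
  finally show ?thesis .
qed


lemma phi_val:
  "(\<Sum>b\<in>basis (UNIV :: party set). cnj (Ufn x (b Alice) \<alpha> * Wfn x (b Bob) \<alpha>2) * bell b) =
    (-1) ^ (card (Ed V E x) + (if \<alpha> then deg V E u x else 0) + (if \<alpha>2 then deg V E v x else 0) + (if \<alpha> \<and> \<alpha>2 then 1 else 0)) / 2"
  unfolding sum_party_basis mkb_simps Ufn_def Wfn_def bell_def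
  by (cases \<alpha>; cases \<alpha>2) (simp_all add: power_add algebra_simps sq2)

lemma phi_sum:
  assumes a: "a \<in> basis V"
  shows "complex_of_real (2 / sqrt (2 ^ card V)) * (\<Sum>x\<in>basis R. \<Sum>b\<in>basis UNIV. cnj (K3f x b a) * bell b) = graph_state V E a"
proof -
  have "(\<Sum>x\<in>basis R. \<Sum>b\<in>basis UNIV. cnj (K3f x b a) * bell b) =
     (\<Sum>x\<in>basis R. if x = restr a R then (\<Sum>b\<in>basis UNIV. cnj (Ufn x (b Alice) (a u) * Wfn x (b Bob) (a v)) * bell b) else 0)"
    unfolding K3f_def by (rule sum.cong[OF refl]) auto
  also have "\<dots> = (\<Sum>b\<in>basis UNIV. cnj (Ufn (restr a R) (b Alice) (a u) * Wfn (restr a R) (b Bob) (a v)) * bell b)"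
    using finite_basis[OF finR] restr_R_basis by (simp add: sum.delta')
  also have "\<dots> = (-1) ^ card (Ed V E a) / 2"
    unfolding phi_val Ed_decomp[OF sg fin uV vV uv Euv a] R_def ..
  finally have e: "(\<Sum>x\<in>basis R. \<Sum>b\<in>basis UNIV. cnj (K3f x b a) * bell b) = (-1) ^ card (Ed V E a) / 2" .
  show ?thesis
    unfolding e graph_state_def Ed_def using a by simp
qed

lemma qfb_cong:
  assumes "\<And>a. a \<in> basis Q \<Longrightarrow> f a = f' a" "\<And>a. a \<in> basis Q \<Longrightarrow> g a = g' a"
  shows "qfb Q M f g = qfb Q M f' g'"
  unfolding qfb_def by (rule sum.cong[OF refl], rule sum.cong[OF refl]) (simp add: assms)

lemma qf_scale: "qf Q M (\<lambda>a. c * f a) = cnj c * c * qf Q M f"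
  unfolding qfb_def sum_distrib_left
  by (rule sum.cong[OF refl], rule sum.cong[OF refl]) (simp add: mult_ac)

lemma cardR: "card V \<ge> 2 \<Longrightarrow> card R = card V - 2"
proof -
  have "{u, v} \<subseteq> V" using uV vV by auto
  then show "card R = card V - 2" unfolding R_def using uv fin by (simp add: card_Diff_subset)
qed

lemma c2n: 
  assumes "card V \<ge> 2"
  shows "(2 / sqrt (2 ^ card V)) ^ 2 * real (card (basis R)) = 1"
proof -
  define k where "k = card V - 2"
  have k: "card V = k + 2" using assms unfolding k_def by simp
  have h1: "real (card (basis R)) = 2 ^ k" using card_basis[OF finR] cardR[OF assms] k by simp
  have h2: "(2 / sqrt (2 ^ card V)) ^ 2 = (2::real) ^ 2 / (sqrt (2 ^ card V)) ^ 2"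
    by (rule power_divide)
  have h3: "(sqrt (2 ^ card V)) ^ 2 = (2::real) ^ card V"
    by (rule real_sqrt_pow2) simp
  have h4: "(2::real) ^ card V = 2 ^ k * 2 ^ 2" unfolding k by (rule power_add)
  show ?thesis unfolding h1 h2 unfolding h3 unfolding h4 by simp
qed


lemma fid3:
  assumes psd: "\<And>w. Re (qf V \<sigma> w) \<ge> 0" and N2: "card V \<ge> 2"
  shows "fidelity V (graph_state V E) \<sigma> \<le>
    fidelity UNIV bell (smap (basis R) V (\<lambda>x. kraus_prod UNIV (part V S) (\<lambda>p. {p}) (K3 x)) \<sigma>)"
proof -
  let ?kp = "\<lambda>x. kraus_prod UNIV (part V S) (\<lambda>p. {p}) (K3 x)"
  let ?\<phi> = "\<lambda>x a. \<Sum>b\<in>basis UNIV. cnj (K3f x b a) * bell b"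
  let ?c = "2 / sqrt (2 ^ card V)"
  have "qf UNIV (smap (basis R) V ?kp \<sigma>) bell = (\<Sum>x\<in>basis R. qf V \<sigma> (\<lambda>a. \<Sum>b\<in>basis UNIV. cnj (?kp x b a) * bell b))"
    unfolding smap_def qf_sum by (rule sum.cong[OF refl], rule qf_app1)
  also have "\<dots> = (\<Sum>x\<in>basis R. qf V \<sigma> (?\<phi> x))"
    by (rule sum.cong[OF refl], rule qfb_cong) (simp_all add: kp3)
  finally have e1: "fidelity UNIV bell (smap (basis R) V ?kp \<sigma>) = (\<Sum>x\<in>basis R. Re (qf V \<sigma> (?\<phi> x)))"
    unfolding fidelity_def qfb_def by (simp add: Re_sum)
  have "qf V \<sigma> (graph_state V E) = qf V \<sigma> (\<lambda>a. complex_of_real ?c * (\<Sum>x\<in>basis R. ?\<phi> x a))"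
    by (rule qfb_cong) (simp_all only: phi_sum)
  also have "\<dots> = complex_of_real (?c ^ 2) * qf V \<sigma> (\<lambda>a. \<Sum>x\<in>basis R. ?\<phi> x a)"
  proof -
    have "cnj (complex_of_real ?c) * complex_of_real ?c = complex_of_real (?c ^ 2)"
      by (simp only: complex_cnj_complex_of_real of_real_mult power2_eq_square)
    then show ?thesis unfolding qf_scale by simp
  qed
  finally have e2: "fidelity V (graph_state V E) \<sigma> = ?c ^ 2 * Re (qf V \<sigma> (\<lambda>a. \<Sum>x\<in>basis R. ?\<phi> x a))"
    unfolding fidelity_def qfb_def by simp
  have "Re (qf V \<sigma> (\<lambda>a. \<Sum>x\<in>basis R. ?\<phi> x a)) \<le> real (card (basis R)) * (\<Sum>x\<in>basis R. Re (qf V \<sigma> (?\<phi> x)))"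
    by (rule avg_ineq[OF psd finite_basis[OF finR]])
  then have "?c ^ 2 * Re (qf V \<sigma> (\<lambda>a. \<Sum>x\<in>basis R. ?\<phi> x a)) \<le>
      ?c ^ 2 * real (card (basis R)) * (\<Sum>x\<in>basis R. Re (qf V \<sigma> (?\<phi> x)))"
    by (simp add: mult.assoc mult_left_mono)
  also have "\<dots> = (\<Sum>x\<in>basis R. Re (qf V \<sigma> (?\<phi> x)))" unfolding c2n[OF N2] by simp
  finally show ?thesis unfolding e1 e2 .
qed

end

lemma cross_edge:
  assumes sg: "simple_graph V E" and con: "graph_connected V E" and SV: "S \<subseteq> V" and "S \<noteq> {}" and "S \<noteq> V"
  shows "\<exists>u v. u \<in> S \<and> v \<in> V \<and> v \<notin> S \<and> E u v"
proof -
  obtain s where s: "s \<in> S" using \<open>S \<noteq> {}\<close> by blast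
  obtain t where t: "t \<in> V" "t \<notin> S" using \<open>S \<noteq> V\<close> SV by blast
  have st: "E\<^sup>*\<^sup>* s t" using con s t SV unfolding graph_connected_def by blast
  have "\<And>y. E\<^sup>*\<^sup>* s y \<Longrightarrow> y \<notin> S \<Longrightarrow> \<exists>u w. u \<in> S \<and> w \<notin> S \<and> E u w"
  proof -
    fix y assume "E\<^sup>*\<^sup>* s y" "y \<notin> S"
    then show "\<exists>u w. u \<in> S \<and> w \<notin> S \<and> E u w"
    proof (induction rule: rtranclp_induct)
      case base then show ?case using s by simp
    next
      case (step y z)
      show ?case
      proof (cases "y \<in> S")
        case True then show ?thesis using step by blast
      next
        case False then show ?thesis using step.IH by blast
      qed
    qed
  qed
  then obtain u w where "u \<in> S" "w \<notin> S" "E u w" using st t by blast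
  moreover have "w \<in> V" using sg \<open>E u w\<close> unfolding simple_graph_def by blast
  ultimately show ?thesis by blast
qed

lemma spsd_copies_noisy:
  assumes lam: "\<forall>j\<in>basis V. lam j \<ge> 0" and fin: "finite V"
  shows "spsd ({..<n} \<times> V) (copies n V (noisy_graph_state V E lam))"
proof (rule spsd_decomp[where J = "PiE {..<n} (\<lambda>_. basis V)" and w = "\<lambda>J. \<Prod>c<n. lam (J c)"
      and f = "\<lambda>J a. \<Prod>c<n. zgraph_state V E (J c) (sl c a)"])
  show "finite (PiE {..<n} (\<lambda>_. basis V))" using fin by (simp add: finite_PiE finite_basis)
  show "\<And>J. J \<in> PiE {..<n} (\<lambda>_. basis V) \<Longrightarrow> 0 \<le> (\<Prod>c<n. lam (J c))"
    using lam by (auto intro!: prod_nonneg)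
  fix a b assume a: "a \<in> basis ({..<n} \<times> V)" and b: "b \<in> basis ({..<n} \<times> V)"
  have "copies n V (noisy_graph_state V E lam) a b = (\<Prod>c<n. \<Sum>j\<in>basis V.
      complex_of_real (lam j) * zgraph_state V E j (sl c a) * cnj (zgraph_state V E j (sl c b)))"
    using a b by (simp add: copies_def noisy_graph_state_def sl_def)
  also have "\<dots> = (\<Sum>J\<in>PiE {..<n} (\<lambda>_. basis V). \<Prod>c<n.
      complex_of_real (lam (J c)) * zgraph_state V E (J c) (sl c a) * cnj (zgraph_state V E (J c) (sl c b)))"
    using fin by (intro prod_sum_PiE) (auto simp: finite_basis)
  also have "\<dots> = (\<Sum>J\<in>PiE {..<n} (\<lambda>_. basis V). complex_of_real (\<Prod>c<n. lam (J c)) *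
      (\<Prod>c<n. zgraph_state V E (J c) (sl c a)) * cnj (\<Prod>c<n. zgraph_state V E (J c) (sl c b)))"
    by (simp add: prod.distrib cnj_prod)
  finally show "copies n V (noisy_graph_state V E lam) a b = (\<Sum>J\<in>PiE {..<n} (\<lambda>_. basis V). complex_of_real (\<Prod>c<n. lam (J c)) *
      (\<Prod>c<n. zgraph_state V E (J c) (sl c a)) * cnj (\<Prod>c<n. zgraph_state V E (J c) (sl c b)))" .
qed

lemma diag_qf: "a \<in> basis Q \<Longrightarrow> finite Q \<Longrightarrow> qf Q M (\<lambda>z. if z = a then 1 else 0) = M a a"
proof -
  assume a: "a \<in> basis Q" and f: "finite Q"
  have "qf Q M (\<lambda>z. if z = a then 1 else 0) = (\<Sum>x\<in>basis Q. if x = a then M x a else 0)"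
    unfolding qfb_def
  proof (rule sum.cong[OF refl])
    fix x assume x: "x \<in> basis Q"
    have e: "\<And>y::complex. \<And>P. y * (if P then 1 else 0) = (if P then y else 0)" by simp
    show "(\<Sum>b\<in>basis Q. cnj (if x = a then 1 else 0) * M x b * (if b = a then 1 else 0)) = (if x = a then M x a else 0)"
      unfolding e using f a by (simp add: finite_basis)
  qed
  also have "\<dots> = M a a" using f a by (simp add: finite_basis)
  finally show ?thesis .
qed

lemma normalize_psd:
  assumes ps: "spsd Q W" and fQ: "finite Q" and t: "trace Q W \<noteq> 0"
    and sig: "\<And>a b. a \<in> basis Q \<Longrightarrow> b \<in> basis Q \<Longrightarrow> \<sigma> a b = W a b / trace Q W"
  shows "\<And>w. Re (qf Q \<sigma> w) \<ge> 0" and "trace Q \<sigma> = 1"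
proof -
  let ?t = "trace Q W"
  have d: "Im (W a a) = 0 \<and> Re (W a a) \<ge> 0" if "a \<in> basis Q" for a
    using ps diag_qf[OF that fQ, of W] unfolding spsd_def by metis
  have imt: "Im ?t = 0" and ret: "Re ?t \<ge> 0" using d unfolding trace_def by (auto simp: Im_sum Re_sum intro: sum_nonneg)
  have tpos: "Re ?t > 0"
  proof -
    have "Re ?t \<noteq> 0" using imt t complex_eq_iff by auto
    then show ?thesis using ret by simp
  qed
  have teq: "?t = complex_of_real (Re ?t)" using imt complex_eq_iff by auto
  fix w
  have "qf Q \<sigma> w = qf Q W w / ?t"
    unfolding qfb_def sum_divide_distrib
    by (rule sum.cong[OF refl], rule sum.cong[OF refl]) (simp add: sig)
  also have "\<dots> = qf Q W w / complex_of_real (Re ?t)" using teq by simp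
  finally have "Re (qf Q \<sigma> w) = Re (qf Q W w) / Re ?t" by (simp add: Re_divide_of_real)
  then show "Re (qf Q \<sigma> w) \<ge> 0" using ps tpos unfolding spsd_def by simp
next
  show "trace Q \<sigma> = 1"
    unfolding trace_def using sig t by (simp add: sum_divide_distrib[symmetric] trace_def)
qed


lemma Union_In: "\<Union>((\<lambda>p. A \<times> {p}) ` (UNIV::party set)) = A \<times> UNIV" by auto
lemma Union_part: "S \<subseteq> V \<Longrightarrow> \<Union>(part V S ` UNIV) = V" unfolding Union_party by (auto simp: part_def)
lemma Union_part2: "S \<subseteq> V \<Longrightarrow> \<Union>((\<lambda>p. A \<times> part V S p) ` UNIV) = A \<times> V" unfolding Union_party by (auto simp: part_def)
lemma Union_q: "\<Union>((\<lambda>q. A \<times> {q}) ` V) = A \<times> V" by auto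
lemma Union_single: "\<Union>((\<lambda>q. {q}) ` V) = V" by auto

theorem theorem1:
  fixes N :: nat and E :: "nat \<Rightarrow> nat \<Rightarrow> bool" and S :: "nat set"
    and lam :: "(nat \<Rightarrow> bool) \<Rightarrow> real" and \<rho>2 :: "party qop"
  assumes "N \<ge> 2"
    and "simple_graph {..<N} E"
    and "graph_connected {..<N} E"
    and "S \<subseteq> {..<N}" and "S \<noteq> {}" and "S \<noteq> {..<N}"
    and "density UNIV \<rho>2"
    and "\<forall>j\<in>basis {..<N}. lam j \<ge> 0"
    and "(\<Sum>j\<in>basis {..<N}. lam j) = 1"
    and "\<exists>m. slocc_converts (UNIV :: party set) (\<lambda>p. {..<m} \<times> {p})
              (\<lambda>p. if p = Alice then S else {..<N} - S)
              (copies m UNIV \<rho>2) (noisy_graph_state {..<N} E lam)"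
    and "\<not> purifiable UNIV \<rho>2 bell"
  shows "\<not> purifiable {..<N} (noisy_graph_state {..<N} E lam) (graph_state {..<N} E)"
proof
  assume P: "purifiable {..<N} (noisy_graph_state {..<N} E lam) (graph_state {..<N} E)"
  define V where "V = {..<N}"
  define \<rho>G where "\<rho>G = noisy_graph_state V E lam"
  have finV: "finite V" by (simp add: V_def)
  have cardV: "card V \<ge> 2" using assms(1) by (simp add: V_def)
  have sg: "simple_graph V E" using assms(2) by (simp add: V_def)
  have SV: "S \<subseteq> V" using assms(4) by (simp add: V_def)
  obtain u v where uv: "u \<in> S" "v \<in> V" "v \<notin> S" "E u v"
    using cross_edge[OF sg _ SV assms(5)] assms(3,6) by (auto simp: V_def)
  interpret g: g3 V E S u v
    using sg finV SV uv by unfold_locales auto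
  have partf: "(\<lambda>p. if p = Alice then S else {..<N} - S) = part V S"
    by (auto simp: part_def V_def)
  obtain m where conv1: "slocc_converts (UNIV :: party set) (\<lambda>p. {..<m} \<times> {p}) (part V S) (copies m UNIV \<rho>2) \<rho>G"
    using assms(10) unfolding partf \<rho>G_def V_def by blast
  then obtain m1 K1 where
     t1: "trace V (slocc_apply UNIV (\<lambda>p. {..<m} \<times> {p}) (part V S) K1 m1 (copies m UNIV \<rho>2)) \<noteq> 0" and
     eq1: "\<forall>b b'. \<rho>G b b' = (if b \<in> basis V \<and> b' \<in> basis V
        then slocc_apply UNIV (\<lambda>p. {..<m} \<times> {p}) (part V S) K1 m1 (copies m UNIV \<rho>2) b b' /
          trace V (slocc_apply UNIV (\<lambda>p. {..<m} \<times> {p}) (part V S) K1 m1 (copies m UNIV \<rho>2)) else 0)"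
    unfolding slocc_converts_def Union_part[OF SV] by blast
  define t1v where "t1v = trace V (slocc_apply UNIV (\<lambda>p. {..<m} \<times> {p}) (part V S) K1 m1 (copies m UNIV \<rho>2))"
  have "purifiable UNIV \<rho>2 bell"
    unfolding purifiable_def
  proof (intro allI impI)
    fix \<epsilon> :: real assume "\<epsilon> > 0"
    then obtain n \<sigma> where conv2: "slocc_converts V (\<lambda>q. {..<n} \<times> {q}) (\<lambda>q. {q}) (copies n V \<rho>G) \<sigma>"
       and fid: "fidelity V (graph_state V E) \<sigma> \<ge> 1 - \<epsilon>"
      using P unfolding purifiable_def V_def \<rho>G_def by blast
    let ?W = "slocc_apply V (\<lambda>q. {..<n} \<times> {q}) (\<lambda>q. {q}) K2 m2 (copies n V \<rho>G)"
    obtain m2 K2 where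
      t2: "trace V (slocc_apply V (\<lambda>q. {..<n} \<times> {q}) (\<lambda>q. {q}) K2 m2 (copies n V \<rho>G)) \<noteq> 0" and
      eq2: "\<forall>b b'. \<sigma> b b' = (if b \<in> basis V \<and> b' \<in> basis V
        then slocc_apply V (\<lambda>q. {..<n} \<times> {q}) (\<lambda>q. {q}) K2 m2 (copies n V \<rho>G) b b' /
          trace V (slocc_apply V (\<lambda>q. {..<n} \<times> {q}) (\<lambda>q. {q}) K2 m2 (copies n V \<rho>G)) else 0)"
      using conv2 unfolding slocc_converts_def Union_single by blast
    define W where "W = slocc_apply V (\<lambda>q. {..<n} \<times> {q}) (\<lambda>q. {q}) K2 m2 (copies n V \<rho>G)"
    define t2v where "t2v = trace V W"
    define Y where "Y = copies (n*m) UNIV \<rho>2"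
    define kpT where "kpT = (\<lambda>\<kappa>. kraus_prod UNIV (\<lambda>p. {..<n*m} \<times> {p}) (\<lambda>p. {..<n} \<times> part V S p) (KT n m K1 \<kappa>))"
    define A2 where "A2 = (\<lambda>k p. kraus_prod (part V S p) (\<lambda>q. {..<n} \<times> {q}) (\<lambda>q. {q}) (K2 k))"
    define kp2 where "kp2 = (\<lambda>k. kraus_prod UNIV (\<lambda>p. {..<n} \<times> part V S p) (part V S) (A2 k))"
    define kp3 where "kp3 = (\<lambda>x. kraus_prod UNIV (part V S) (\<lambda>p. {p}) (g.K3 x))"
    define PiI where "PiI = PiE {..<n} (\<lambda>_. {..<m1})"
    define Phi1 where "Phi1 = smap PiI ({..<n*m} \<times> UNIV) kpT"
    define Phi2 where "Phi2 = smap {..<m2} ({..<n} \<times> V) kp2"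
    define Phi3 where "Phi3 = smap (basis g.R) V kp3"
    have W_eq: "W = Phi2 (copies n V \<rho>G)"
    proof -
      have "(\<lambda>k. kraus_prod V (\<lambda>q. {..<n} \<times> {q}) (\<lambda>q. {q}) (K2 k)) = kp2"
        unfolding kp2_def A2_def by (intro ext) (rule regroup[OF SV finV])
      then show ?thesis unfolding W_def slocc_smap Union_q Phi2_def by simp
    qed
    have F1: "Phi1 Y a a' = t1v ^ n * copies n V \<rho>G a a'"
      if "a \<in> basis ({..<n} \<times> V)" "a' \<in> basis ({..<n} \<times> V)" for a a'
    proof -
      have G: "\<rho>G \<beta> \<beta>' = smap {..<m1} ({..<m} \<times> UNIV) (\<lambda>k. kraus_prod UNIV (\<lambda>p. {..<m} \<times> {p}) (part V S) (K1 k)) (copies m UNIV \<rho>2) \<beta> \<beta>' / t1v"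
        if "\<beta> \<in> basis V" "\<beta>' \<in> basis V" for \<beta> \<beta>'
        using eq1 that unfolding t1v_def slocc_smap Union_In by simp
      show ?thesis
        unfolding Phi1_def PiI_def kpT_def Y_def
        by (rule tensor_stage[OF _ _ G that]) (simp_all add: t1 t1v_def)
    qed
    have F2: "Phi2 (Phi1 Y) a a' = t1v ^ n * t2v * \<sigma> a a'"
      if "a \<in> basis V" "a' \<in> basis V" for a a'
    proof -
      have "Phi2 (Phi1 Y) = Phi2 (\<lambda>a a'. t1v ^ n * copies n V \<rho>G a a')"
        unfolding Phi2_def by (rule smap_cong) (simp add: F1)
      then have "Phi2 (Phi1 Y) a a' = t1v ^ n * W a a'"
        unfolding Phi2_def W_eq by (simp add: smap_scale)
      also have "W a a' = t2v * \<sigma> a a'"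
        using eq2 that t2 unfolding W_def t2v_def by simp
      finally show ?thesis by simp
    qed
    have F3: "Phi3 (Phi2 (Phi1 Y)) b b' = (t1v ^ n * t2v) * Phi3 \<sigma> b b'" for b b'
    proof -
      have "Phi3 (Phi2 (Phi1 Y)) = Phi3 (\<lambda>a a'. (t1v ^ n * t2v) * \<sigma> a a')"
        unfolding Phi3_def by (rule smap_cong) (simp add: F2)
      then show ?thesis unfolding Phi3_def by (simp add: smap_scale)
    qed
    define InT where "InT = (\<lambda>p::party. {..<n*m} \<times> {p})"
    define Ifin where "Ifin = basis g.R \<times> ({..<m2} \<times> PiI)"
    define B where "B = (\<lambda>k2 \<kappa> p b a. \<Sum>mm\<in>basis ({..<n} \<times> part V S p). A2 k2 p b mm * KT n m K1 \<kappa> p mm a)"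
    define Afin where "Afin = (\<lambda>(x, k2, \<kappa>) p b a. \<Sum>mm\<in>basis (part V S p). g.K3 x p b mm * B k2 \<kappa> p mm a)"
    have finQ: "finite ({..<n*m} \<times> (UNIV::party set))" by simp
    have finM: "finite ({..<n} \<times> V)" using finV by simp
    have finIfin: "finite Ifin" unfolding Ifin_def PiI_def using g.finR by (simp add: finite_basis finite_PiE)
    have F4: "Phi3 (Phi2 (Phi1 Y)) = smap Ifin ({..<n*m} \<times> UNIV)
       (\<lambda>(x, k). comp V (kp3 x) ((\<lambda>(k2, \<kappa>). comp ({..<n} \<times> V) (kp2 k2) (kpT \<kappa>)) k)) Y"
      unfolding Phi3_def Phi2_def Phi1_def Ifin_def
      unfolding smap_comp[OF finQ finM] smap_comp[OF finQ finV] ..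
    have F5: "comp ({..<n} \<times> V) (kp2 k2) (kpT \<kappa>) = kraus_prod UNIV InT (part V S) (B k2 \<kappa>)" for k2 \<kappa>
    proof (intro ext)
      fix b a
      have d: "{..<n} \<times> part V S Alice \<inter> {..<n} \<times> part V S Bob = {}" by (auto simp: part_def)
      have f1: "finite ({..<n} \<times> part V S Alice)" "finite ({..<n} \<times> part V S Bob)"
        using finV SV by (auto simp: part_def intro: finite_subset)
      show "comp ({..<n} \<times> V) (kp2 k2) (kpT \<kappa>) b a = kraus_prod UNIV InT (part V S) (B k2 \<kappa>) b a"
        unfolding kp2_def kpT_def B_def InT_def
        by (rule comp_kp[OF d f1, unfolded Union_part2[OF SV]])
    qed
    have F6: "comp V (kp3 x) (kraus_prod UNIV InT (part V S) (B k2 \<kappa>)) = kraus_prod UNIV InT (\<lambda>p. {p}) (Afin (x, k2, \<kappa>))" for x k2 \<kappa>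
    proof (intro ext)
      fix b a
      have d: "part V S Alice \<inter> part V S Bob = {}" by (auto simp: part_def)
      have f1: "finite (part V S Alice)" "finite (part V S Bob)"
        using finV SV by (auto simp: part_def intro: finite_subset)
      show "comp V (kp3 x) (kraus_prod UNIV InT (part V S) (B k2 \<kappa>)) b a = kraus_prod UNIV InT (\<lambda>p. {p}) (Afin (x, k2, \<kappa>)) b a"
        unfolding kp3_def Afin_def
        using comp_kp[OF d f1, unfolded Union_part[OF SV]] by simp
    qed
    have KF: "(\<lambda>(x, k). comp V (kp3 x) ((\<lambda>(k2, \<kappa>). comp ({..<n} \<times> V) (kp2 k2) (kpT \<kappa>)) k)) =
        (\<lambda>i. kraus_prod UNIV InT (\<lambda>p. {p}) (Afin i))"
      by (intro ext) (auto simp: F5 F6 split: prod.splits)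
    obtain mf Kf where F7: "\<And>\<rho>. slocc_apply UNIV InT (\<lambda>p. {p}) Kf mf \<rho> =
        smap Ifin (\<Union>(InT ` UNIV)) (\<lambda>i. kraus_prod UNIV InT (\<lambda>p. {p}) (Afin i)) \<rho>"
      using smap_to_slocc[OF finIfin] by blast
    define \<Omega> where "\<Omega> = slocc_apply UNIV InT (\<lambda>p. {p}) Kf mf Y"
    have Om: "\<Omega> b b' = (t1v ^ n * t2v) * Phi3 \<sigma> b b'" for b b'
    proof -
      have "\<Omega> = smap Ifin (\<Union>(InT ` UNIV)) (\<lambda>i. kraus_prod UNIV InT (\<lambda>p. {p}) (Afin i)) Y"
        unfolding \<Omega>_def F7 ..
      also have "\<dots> = Phi3 (Phi2 (Phi1 Y))" unfolding F4 KF unfolding InT_def Union_In ..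
      finally show ?thesis using F3 by simp
    qed
    have spW: "spsd V W"
      unfolding W_eq Phi2_def \<rho>G_def
      by (rule spsd_smap, rule spsd_copies_noisy) (use assms(8) finV in \<open>simp_all add: V_def\<close>)
    have sigW: "\<sigma> a b = W a b / trace V W" if "a \<in> basis V" "b \<in> basis V" for a b
      using eq2 that unfolding W_def by simp
    have psd\<sigma>: "\<And>w. Re (qf V \<sigma> w) \<ge> 0" and tr\<sigma>: "trace V \<sigma> = 1"
      using normalize_psd[OF spW finV _ sigW] t2 unfolding W_def by auto
    have t1nz: "t1v \<noteq> 0" using t1 unfolding t1v_def .
    have t2nz: "t2v \<noteq> 0" using t2 unfolding t2v_def W_def .
    have trOm: "trace UNIV \<Omega> = t1v ^ n * t2v"
    proof -
      have "trace UNIV \<Omega> = (t1v ^ n * t2v) * trace UNIV (Phi3 \<sigma>)"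
        unfolding trace_def Om sum_distrib_left ..
      also have "trace UNIV (Phi3 \<sigma>) = 1" unfolding Phi3_def kp3_def g.trace3 tr\<sigma> ..
      finally show ?thesis by simp
    qed
    have trnz: "trace UNIV \<Omega> \<noteq> 0" unfolding trOm using t1nz t2nz by simp
    define \<sigma>f where "\<sigma>f = (\<lambda>b b'. if b \<in> basis (\<Union>((\<lambda>p. {p}) ` (UNIV::party set))) \<and> b' \<in> basis (\<Union>((\<lambda>p. {p}) ` (UNIV::party set)))
        then \<Omega> b b' / trace (\<Union>((\<lambda>p. {p}) ` (UNIV::party set))) \<Omega> else 0)"
    have UU: "\<Union>((\<lambda>p. {p}) ` (UNIV::party set)) = UNIV" by auto
    have conv: "slocc_converts UNIV InT (\<lambda>p. {p}) Y \<sigma>f"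
      unfolding slocc_converts_def
    proof (intro conjI)
      show "finite (UNIV :: party set)" by simp
      show "\<forall>p\<in>UNIV. finite (InT p) \<and> finite {p}" by (simp add: InT_def)
      show "\<forall>p\<in>UNIV. \<forall>p'\<in>UNIV. p \<noteq> p' \<longrightarrow> InT p \<inter> InT p' = {} \<and> {p} \<inter> {p'} = {}" by (auto simp: InT_def)
      show "\<exists>m K. trace (\<Union>((\<lambda>p. {p}) ` UNIV)) (slocc_apply UNIV InT (\<lambda>p. {p}) K m Y) \<noteq> 0 \<and>
          (\<forall>b b'. \<sigma>f b b' = (if b \<in> basis (\<Union>((\<lambda>p. {p}) ` UNIV)) \<and> b' \<in> basis (\<Union>((\<lambda>p. {p}) ` UNIV))
            then slocc_apply UNIV InT (\<lambda>p. {p}) K m Y b b' / trace (\<Union>((\<lambda>p. {p}) ` UNIV)) (slocc_apply UNIV InT (\<lambda>p. {p}) K m Y) else 0))"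
        using trnz unfolding \<sigma>f_def \<Omega>_def UU by blast
    qed
    have sf: "\<sigma>f = Phi3 \<sigma>"
      unfolding \<sigma>f_def UU basis_UNIV trOm Om using t1nz t2nz by (intro ext) simp
    have "1 - \<epsilon> \<le> fidelity V (graph_state V E) \<sigma>" using fid .
    also have "\<dots> \<le> fidelity UNIV bell (Phi3 \<sigma>)"
      unfolding Phi3_def kp3_def by (rule g.fid3[OF psd\<sigma> cardV])
    finally have "1 - \<epsilon> \<le> fidelity UNIV bell \<sigma>f" unfolding sf .
    then show "\<exists>n \<sigma>. slocc_converts UNIV (\<lambda>q. {..<n} \<times> {q}) (\<lambda>q. {q}) (copies n UNIV \<rho>2) \<sigma> \<and> 1 - \<epsilon> \<le> fidelity UNIV bell \<sigma>"
      using conv unfolding InT_def Y_def by blast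
  qed
  then show False using assms(11) by simp
qed


end
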